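(* Let $n\geq 4$ and let $L$ be an indecomposable solvable Lie algebra over $\mathbb{K}\in\{\mathbb{C},\mathbb{R}\}$ with nilradical $T(n)$ and $\dim L=1+\frac12n(n-1)$, with basis $\{X\}\cup\{N_{ik}:1\leq i<k\leq n\}$ and structure matrix $A=(A_{ik,ab})$ given by $[X,N_{ik}]=\sum_{a<b}A_{ik,ab}N_{ab}$, brought to canonical form. Then: (1) $A$ has at most $n-2$ nonzero off-diagonal entries. (2) These off-diagonal entries can all be normalized to $+1$ if $\mathbb{K}=\mathbb{C}$, and to $+1$ or $-1$ if $\mathbb{K}=\mathbb{R}$.
   Context: $T(n)$ is the Lie algebra of strictly upper triangular $n\times n$ matrices over $\mathbb{K}$, with basis the matrix units $N_{ik}$ and brackets $[N_{ik},N_{ab}]=\delta_{ka}N_{ib}-\delta_{bi}N_{ak}$. The nilradical is the maximal nilpotent ideal; $X$ is a nonnilpotent element spanning a complement. $A$ is indexed by pairs $(i,k)$, $i<k$, ordered first by $k-i$ then by $i$. The canonical form is the form obtained by admissible transformations: (i) $X\to X+\sum\mu_{pq}N_{pq}$; (ii) changes of basis $N\to GN$ of the nilradical preserving its commutation relations ($A\to GAG^{-1}$); (iii) rescaling $X$; in this form as many off-diagonal entries as possible are annulled, and normalization refers to rescaling nonzero entries by such basis changes. *)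

theory Defs
  imports Complex_Main
begin

text \<open>Index set of the basis N_ik of T(n): pairs (i,k) with 1 <= i < k <= n.\<close>
definition Pn :: "nat \<Rightarrow> (nat \<times> nat) set" where
  "Pn n = {(i,k). 1 \<le> i \<and> i < k \<and> k \<le> n}"

text \<open>T(n): strictly upper triangular n x n matrices, as functions on index pairs.\<close>
definition Tn :: "nat \<Rightarrow> (nat \<times> nat \<Rightarrow> 'a::field) set" where
  "Tn n = {v. \<forall>p. p \<notin> Pn n \<longrightarrow> v p = 0}"

text \<open>Matrix commutator; on basis elements [N_ik,N_ab] = d_ka N_ib - d_bi N_ak.\<close>
definition brk :: "nat \<Rightarrow> (nat \<times> nat \<Rightarrow> 'a::field) \<Rightarrow> (nat \<times> nat \<Rightarrow> 'a) \<Rightarrow> (nat \<times> nat \<Rightarrow> 'a)" where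
  "brk n v w = (\<lambda>(a,b). \<Sum>j\<in>{1..n}. v (a,j) * w (j,b) - w (a,j) * v (j,b))"

definition Eu :: "nat \<times> nat \<Rightarrow> (nat \<times> nat \<Rightarrow> 'a::field)" where
  "Eu p = (\<lambda>q. if q = p then 1 else 0)"

text \<open>Linear map of T(n) given by a matrix M indexed by pairs:
  N_p |-> sum_q M p q N_q.\<close>
definition linmap :: "nat \<Rightarrow> (nat \<times> nat \<Rightarrow> nat \<times> nat \<Rightarrow> 'a::field) \<Rightarrow> (nat \<times> nat \<Rightarrow> 'a) \<Rightarrow> (nat \<times> nat \<Rightarrow> 'a)" where
  "linmap n M v = (\<lambda>q. if q \<in> Pn n then (\<Sum>p\<in>Pn n. v p * M p q) else 0)"

text \<open>A is a structure matrix, i.e. [X,N_p] = sum_q A p q N_q defines a derivation of T(n)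
  (this is the Jacobi identity for L = span X + T(n)).\<close>
definition is_derivation :: "nat \<Rightarrow> (nat \<times> nat \<Rightarrow> nat \<times> nat \<Rightarrow> 'a::field) \<Rightarrow> bool" where
  "is_derivation n A \<longleftrightarrow>
     (\<forall>v\<in>Tn n. \<forall>w\<in>Tn n. linmap n A (brk n v w) = (\<lambda>q. brk n (linmap n A v) w q + brk n v (linmap n A w) q))"

text \<open>ad X restricted to the nilradical is not nilpotent.\<close>
definition nonnilpotent :: "nat \<Rightarrow> (nat \<times> nat \<Rightarrow> nat \<times> nat \<Rightarrow> 'a::field) \<Rightarrow> bool" where
  "nonnilpotent n A \<longleftrightarrow> \<not> (\<exists>m. \<forall>v\<in>Tn n. (linmap n A ^^ m) v = (\<lambda>_. 0))"

text \<open>The Lie algebra L = span{X} + T(n): elements (t,v) stand for t X + v.\<close>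
definition Lc :: "nat \<Rightarrow> ('a::field \<times> (nat \<times> nat \<Rightarrow> 'a)) set" where
  "Lc n = {(t,v). v \<in> Tn n}"

definition Lbr :: "nat \<Rightarrow> (nat \<times> nat \<Rightarrow> nat \<times> nat \<Rightarrow> 'a::field)
   \<Rightarrow> ('a \<times> (nat \<times> nat \<Rightarrow> 'a)) \<Rightarrow> ('a \<times> (nat \<times> nat \<Rightarrow> 'a)) \<Rightarrow> ('a \<times> (nat \<times> nat \<Rightarrow> 'a))" where
  "Lbr n A x y = (0, (\<lambda>q. fst x * linmap n A (snd y) q - fst y * linmap n A (snd x) q
                          + brk n (snd x) (snd y) q))"

definition L_ideal :: "nat \<Rightarrow> (nat \<times> nat \<Rightarrow> nat \<times> nat \<Rightarrow> 'a::field) \<Rightarrow> ('a \<times> (nat \<times> nat \<Rightarrow> 'a)) set \<Rightarrow> bool" where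
  "L_ideal n A I \<longleftrightarrow> I \<subseteq> Lc n \<and> (0, \<lambda>_. 0) \<in> I
     \<and> (\<forall>x\<in>I. \<forall>y\<in>I. (fst x + fst y, \<lambda>q. snd x q + snd y q) \<in> I)
     \<and> (\<forall>c. \<forall>x\<in>I. (c * fst x, \<lambda>q. c * snd x q) \<in> I)
     \<and> (\<forall>x\<in>Lc n. \<forall>y\<in>I. Lbr n A x y \<in> I)"

definition indecomposable :: "nat \<Rightarrow> (nat \<times> nat \<Rightarrow> nat \<times> nat \<Rightarrow> 'a::field) \<Rightarrow> bool" where
  "indecomposable n A \<longleftrightarrow> \<not> (\<exists>I J. L_ideal n A I \<and> L_ideal n A J
      \<and> I \<noteq> {(0, \<lambda>_. 0)} \<and> J \<noteq> {(0, \<lambda>_. 0)} \<and> I \<inter> J = {(0, \<lambda>_. 0)}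
      \<and> (\<forall>z\<in>Lc n. \<exists>x\<in>I. \<exists>y\<in>J. z = (fst x + fst y, \<lambda>q. snd x q + snd y q)))"

text \<open>Single admissible transformations of the structure matrix (only entries on Pn x Pn matter).
  (i) X -> X + M, M in T(n);  (ii) N -> G N, G an automorphism of T(n), A -> G A G^-1;
  (iii) X -> c X, c nonzero.\<close>
definition adm_step :: "nat \<Rightarrow> (nat \<times> nat \<Rightarrow> nat \<times> nat \<Rightarrow> 'a::field) \<Rightarrow> (nat \<times> nat \<Rightarrow> nat \<times> nat \<Rightarrow> 'a) \<Rightarrow> bool" where
  "adm_step n A A' \<longleftrightarrow>
     (\<exists>\<mu>\<in>Tn n. \<forall>p\<in>Pn n. \<forall>q\<in>Pn n. A' p q = A p q + brk n \<mu> (Eu p) q)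
   \<or> (\<exists>G. bij_betw (linmap n G) (Tn n) (Tn n)
          \<and> (\<forall>v\<in>Tn n. \<forall>w\<in>Tn n. linmap n G (brk n v w) = (\<lambda>q. if q \<in> Pn n then brk n (linmap n G v) (linmap n G w) q else 0))
          \<and> (\<forall>p\<in>Pn n. \<forall>s\<in>Pn n. (\<Sum>r\<in>Pn n. G p r * A r s) = (\<Sum>r\<in>Pn n. A' p r * G r s)))
   \<or> (\<exists>c. c \<noteq> 0 \<and> (\<forall>p\<in>Pn n. \<forall>q\<in>Pn n. A' p q = c * A p q))"

definition admissible :: "nat \<Rightarrow> (nat \<times> nat \<Rightarrow> nat \<times> nat \<Rightarrow> 'a::field) \<Rightarrow> (nat \<times> nat \<Rightarrow> nat \<times> nat \<Rightarrow> 'a) \<Rightarrow> bool" where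
  "admissible n = (adm_step n)\<^sup>*\<^sup>*"

definition offdiag_support :: "nat \<Rightarrow> (nat \<times> nat \<Rightarrow> nat \<times> nat \<Rightarrow> 'a::field) \<Rightarrow> ((nat \<times> nat) \<times> (nat \<times> nat)) set" where
  "offdiag_support n A = {(p,q). p \<in> Pn n \<and> q \<in> Pn n \<and> p \<noteq> q \<and> A p q \<noteq> 0}"

definition offdiag_count :: "nat \<Rightarrow> (nat \<times> nat \<Rightarrow> nat \<times> nat \<Rightarrow> 'a::field) \<Rightarrow> nat" where
  "offdiag_count n A = card (offdiag_support n A)"

definition canonical_form :: "nat \<Rightarrow> (nat \<times> nat \<Rightarrow> nat \<times> nat \<Rightarrow> 'a::field) \<Rightarrow> (nat \<times> nat \<Rightarrow> nat \<times> nat \<Rightarrow> 'a) \<Rightarrow> bool" where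
  "canonical_form n A A' \<longleftrightarrow> admissible n A A'
     \<and> (\<forall>A''. admissible n A A'' \<longrightarrow> offdiag_count n A' \<le> offdiag_count n A'')"

definition valid_structure :: "nat \<Rightarrow> (nat \<times> nat \<Rightarrow> nat \<times> nat \<Rightarrow> 'a::field) \<Rightarrow> bool" where
  "valid_structure n A \<longleftrightarrow> is_derivation n A \<and> nonnilpotent n A \<and> indecomposable n A"

definition normalizable_to :: "nat \<Rightarrow> 'a::field set \<Rightarrow> (nat \<times> nat \<Rightarrow> nat \<times> nat \<Rightarrow> 'a) \<Rightarrow> bool" where
  "normalizable_to n S A' \<longleftrightarrow> (\<exists>A''. admissible n A' A''
      \<and> offdiag_support n A'' = offdiag_support n A'
      \<and> (\<forall>(p,q)\<in>offdiag_support n A''. A'' p q \<in> S))"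

end

theory Submission
  imports Defs
begin


lemma Pn_iff[simp]: "(i,k) \<in> Pn n \<longleftrightarrow> 1 \<le> i \<and> i < k \<and> k \<le> n"
  by (simp add: Pn_def)

lemma finite_Pn[simp]: "finite (Pn n)"
proof -
  have "Pn n \<subseteq> {1..n} \<times> {1..n}" by (auto simp: Pn_def)
  thus ?thesis by (rule finite_subset) auto
qed

lemma Tn_iff: "v \<in> Tn n \<longleftrightarrow> (\<forall>p. p \<notin> Pn n \<longrightarrow> v p = 0)"
  by (simp add: Tn_def)

lemma Tn_zero: "v \<in> Tn n \<Longrightarrow> \<not> (1 \<le> i \<and> i < k \<and> k \<le> n) \<Longrightarrow> v (i,k) = 0"
  by (auto simp: Tn_def)

lemma m1: "(if c then 1 else 0) * (x::'a::comm_semiring_1) = (if c then x else 0)" by simp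
lemma m2: "(x::'a::comm_semiring_1) * (if c then 1 else 0) = (if c then x else 0)" by simp

lemma Eu_eq: "Eu p q = (if q = p then 1 else 0)" by (simp add: Eu_def)

lemma brk_Eu_right:
  assumes "a \<in> {1..n}" "b \<in> {1..n}"
  shows "brk n v (Eu (a,b)) (x,y) = (if b = y then v (x,a) else 0) - (if x = a then v (b,y) else 0)"
proof -
  have "brk n v (Eu (a,b)) (x,y) = (\<Sum>j\<in>{1..n}. (if j = a then (if b = y then v (x,j) else 0) else 0))
      - (\<Sum>j\<in>{1..n}. (if j = b then (if x = a then v (j,y) else 0) else 0))"
    unfolding brk_def Eu_eq case_prod_conv sum_subtractf[symmetric] by (rule sum.cong) auto
  also have "\<dots> = (if b = y then v (x,a) else 0) - (if x = a then v (b,y) else 0)"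
    using assms by (simp only: sum.delta finite_atLeastAtMost) simp
  finally show ?thesis .
qed

lemma brk_Eu_left:
  assumes "i \<in> {1..n}" "k \<in> {1..n}"
  shows "brk n (Eu (i,k)) w (x,y) = (if x = i then w (k,y) else 0) - (if y = k then w (x,i) else 0)"
proof -
  have "brk n (Eu (i,k)) w (x,y) = (\<Sum>j\<in>{1..n}. (if j = k then (if x = i then w (j,y) else 0) else 0))
      - (\<Sum>j\<in>{1..n}. (if j = i then (if y = k then w (x,j) else 0) else 0))"
    unfolding brk_def Eu_eq case_prod_conv sum_subtractf[symmetric] by (rule sum.cong) auto
  also have "\<dots> = (if x = i then w (k,y) else 0) - (if y = k then w (x,i) else 0)"
    using assms by (simp only: sum.delta finite_atLeastAtMost) simp
  finally show ?thesis .
qed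

lemma brk_Eu_Eu:
  assumes "(i,k) \<in> Pn n" "(a,b) \<in> Pn n"
  shows "brk n (Eu (i,k)) (Eu (a,b)) q = (if k = a \<and> q = (i,b) then 1 else 0) - (if b = i \<and> q = (a,k) then 1 else 0)"
proof -
  obtain x y where q: "q = (x,y)" by (cases q)
  have "i \<in> {1..n}" "k \<in> {1..n}" using assms by auto
  hence "brk n (Eu (i,k)) (Eu (a,b)) q = (if x = i then Eu (a,b) (k,y) else 0) - (if y = k then Eu (a,b) (x,i) else 0)"
    unfolding q by (rule brk_Eu_left)
  thus ?thesis using assms unfolding q Eu_def by auto
qed

lemma linmap_Eu:
  assumes "p \<in> Pn n"
  shows "linmap n B (Eu p) = (\<lambda>q. if q \<in> Pn n then B p q else 0)"
proof
  fix q
  have "(\<Sum>pa\<in>Pn n. Eu p pa * B pa q) = B p q"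
    unfolding Eu_eq using assms by (simp only: m1 sum.delta finite_Pn if_True)
  thus "linmap n B (Eu p) q = (if q \<in> Pn n then B p q else 0)" unfolding linmap_def by simp
qed

definition ent :: "nat \<Rightarrow> (nat \<times> nat \<Rightarrow> nat \<times> nat \<Rightarrow> 'a::field) \<Rightarrow> nat \<times> nat \<Rightarrow> nat \<times> nat \<Rightarrow> 'a" where
  "ent n B s t = (if s \<in> Pn n \<and> t \<in> Pn n then B s t else 0)"

definition deq :: "nat \<Rightarrow> (nat \<times> nat \<Rightarrow> nat \<times> nat \<Rightarrow> 'a::field) \<Rightarrow> bool" where
  "deq n e \<longleftrightarrow> (\<forall>i k a b x y. (i,k) \<in> Pn n \<longrightarrow> (a,b) \<in> Pn n \<longrightarrow> (x,y) \<in> Pn n \<longrightarrow>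
     (if k = a then e (i,b) (x,y) else 0) - (if b = i then e (a,k) (x,y) else 0) =
     (if b = y then e (i,k) (x,a) else 0) - (if x = a then e (i,k) (b,y) else 0)
     + (if x = i then e (a,b) (k,y) else 0) - (if y = k then e (a,b) (x,i) else 0))"

lemma linmap_brk_Eu:
  assumes "(i,k) \<in> Pn n" "(a,b) \<in> Pn n" "r \<in> Pn n"
  shows "linmap n B (brk n (Eu (i,k)) (Eu (a,b))) r = (if k = a then B (i,b) r else 0) - (if b = i then B (a,k) r else 0)"
proof -
  have "linmap n B (brk n (Eu (i,k)) (Eu (a,b))) r =
     (\<Sum>p\<in>Pn n. (if p = (i,b) then (if k = a then B p r else 0) else 0)) - (\<Sum>p\<in>Pn n. (if p = (a,k) then (if b = i then B p r else 0) else 0))"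
    unfolding linmap_def brk_Eu_Eu[OF assms(1,2)] using assms(3) sum_subtractf[symmetric]
    by (simp only: if_True sum_subtractf[symmetric]) (rule sum.cong, auto)
  also have "\<dots> = (if k = a then B (i,b) r else 0) - (if b = i then B (a,k) r else 0)"
    using assms by (simp only: sum.delta finite_Pn) auto
  finally show ?thesis .
qed

lemma linmap_Eu_ent: "p \<in> Pn n \<Longrightarrow> linmap n B (Eu p) = ent n B p"
  by (rule ext) (simp add: linmap_Eu ent_def)

lemma deriv_deq:
  assumes "is_derivation n B"
  shows "deq n (ent n B)"
  unfolding deq_def
proof (intro allI impI)
  fix i k a b x y assume h: "(i,k) \<in> Pn n" "(a,b) \<in> Pn n" "(x,y) \<in> Pn n"
  have T1: "Eu (i,k) \<in> Tn n" "Eu (a,b) \<in> Tn n" using h by (auto simp: Tn_def Eu_def)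
  from assms[unfolded is_derivation_def, rule_format, OF T1]
  have E: "linmap n B (brk n (Eu (i, k)) (Eu (a, b))) (x,y) =
     brk n (linmap n B (Eu (i, k))) (Eu (a, b)) (x,y) + brk n (Eu (i, k)) (linmap n B (Eu (a, b))) (x,y)"
    by metis
  have m: "i \<in> {1..n}" "k \<in> {1..n}" "a \<in> {1..n}" "b \<in> {1..n}" using h by auto
  have L: "linmap n B (brk n (Eu (i, k)) (Eu (a, b))) (x,y) = (if k = a then ent n B (i,b) (x,y) else 0) - (if b = i then ent n B (a,k) (x,y) else 0)"
    unfolding linmap_brk_Eu[OF h] using h by (auto simp: ent_def)
  have R1: "brk n (linmap n B (Eu (i, k))) (Eu (a, b)) (x,y) = (if b = y then ent n B (i,k) (x,a) else 0) - (if x = a then ent n B (i,k) (b,y) else 0)"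
    unfolding linmap_Eu_ent[OF h(1)] by (rule brk_Eu_right[OF m(3,4)])
  have R2: "brk n (Eu (i, k)) (linmap n B (Eu (a, b))) (x,y) = (if x = i then ent n B (a,b) (k,y) else 0) - (if y = k then ent n B (a,b) (x,i) else 0)"
    unfolding linmap_Eu_ent[OF h(2)] by (rule brk_Eu_left[OF m(1,2)])
  show "(if k = a then ent n B (i,b) (x,y) else 0) - (if b = i then ent n B (a,k) (x,y) else 0) =
     (if b = y then ent n B (i,k) (x,a) else 0) - (if x = a then ent n B (i,k) (b,y) else 0)
     + (if x = i then ent n B (a,b) (k,y) else 0) - (if y = k then ent n B (a,b) (x,i) else 0)"
    using E unfolding L R1 R2 by simp
qed



definition isD :: "nat \<Rightarrow> nat \<times> nat \<Rightarrow> nat \<times> nat \<Rightarrow> bool" where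
  "isD n s t \<longleftrightarrow> (s = (1,2) \<and> t = (2,n)) \<or> (\<exists>i. 2 \<le> i \<and> i + 2 \<le> n \<and> s = (i,i+1) \<and> t = (1,n))
     \<or> (s = (n-1,n) \<and> t = (1,n-1))"

lemma deqD:
  assumes "deq n e" "(i,k) \<in> Pn n" "(a,b) \<in> Pn n" "(x,y) \<in> Pn n"
  shows "(if k = a then e (i,b) (x,y) else 0) - (if b = i then e (a,k) (x,y) else 0) =
     (if b = y then e (i,k) (x,a) else 0) - (if x = a then e (i,k) (b,y) else 0)
     + (if x = i then e (a,b) (k,y) else 0) - (if y = k then e (a,b) (x,i) else 0)"
  using assms unfolding deq_def by blast

locale dctx =
  fixes n :: nat and e :: "nat \<times> nat \<Rightarrow> nat \<times> nat \<Rightarrow> 'a::field_char_0"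
  assumes n4: "4 \<le> n"
    and d: "deq n e"
    and R1: "\<And>a b. 2 \<le> a \<Longrightarrow> a < b \<Longrightarrow> b \<le> n \<Longrightarrow> e (a-1,a) (a-1,b) = 0"
    and R2: "\<And>b. 1 < b \<Longrightarrow> b < n \<Longrightarrow> e (b,b+1) (1,b+1) = 0"
    and ez: "\<And>s t. s \<notin> Pn n \<or> t \<notin> Pn n \<Longrightarrow> e s t = 0"
begin

lemma gen_row:
  assumes j: "1 \<le> j" "j < n" and xy: "(x,y) \<in> Pn n" and ne: "(x,y) \<noteq> (j,j+1)"
    and nD: "\<not> isD n (j,j+1) (x,y)"
  shows "e (j,j+1) (x,y) = 0"
proof -
  have x1: "1 \<le> x" "x < y" "y \<le> n" using xy by auto
  show ?thesis
  proof (cases "x = j")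
    case True
    hence "y > j+1" using ne x1 by auto
    thus ?thesis using R1[of "j+1" y] True x1 j by simp
  next
    case xj: False
    show ?thesis
    proof (cases "y = j+1")
      case True
      hence xlt: "x < j" using x1 xj by auto
      show ?thesis
      proof (cases "x = 1")
        case True thus ?thesis using R2[of j] \<open>y = j+1\<close> xlt j by simp
      next
        case False
        have "(x-1,x) \<in> Pn n" "(j,j+1) \<in> Pn n" "(x-1,j+1) \<in> Pn n" using False x1 j xlt by auto
        note E = deqD[OF d this]
        have "Suc j \<noteq> x - Suc 0" "x - Suc 0 \<noteq> j" using xlt by arith+
        hence "0 = e (x-1,x) (x-1,j) + e (j,j+1) (x,j+1)"
          using E False xlt by simp
        moreover have "e (x-1,x) (x-1,j) = 0" using R1[of x j] False x1 xlt j by simp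
        ultimately show ?thesis using True by simp
      qed
    next
      case yj: False
      show ?thesis
      proof (cases "(y < n \<and> j + 2 \<le> n) \<or> (j + 1 = n \<and> y + 3 \<le> n)")
        case True
        define b' where "b' = (if y < n \<and> j + 2 \<le> n then n else y+1)"
        have b': "y < b'" "b' \<le> n" "b' \<noteq> j" "b' \<noteq> j+1" using True j by (auto simp: b'_def)
        have "(j,j+1) \<in> Pn n" "(y,b') \<in> Pn n" "(x,b') \<in> Pn n" using b' j x1 by auto
        from deqD[OF d this] show ?thesis using b' xj yj x1 by simp
      next
        case nC1: False
        show ?thesis
        proof (cases "(2 \<le> x \<and> 2 \<le> j) \<or> (j = 1 \<and> 4 \<le> x)")
          case True
          define a' where "a' = (if 2 \<le> x \<and> 2 \<le> j then 1 else x - 1)"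
          have a': "1 \<le> a'" "a' < x" "a' \<noteq> j" "a' \<noteq> j+1" using True j by (auto simp: a'_def)
          have "(j,j+1) \<in> Pn n" "(a',x) \<in> Pn n" "(a',y) \<in> Pn n" using a' j x1 by auto
          from deqD[OF d this] show ?thesis using a' xj yj x1 by simp
        next
          case nC2: False
          have cases: "(j = 1 \<and> x = 3 \<and> y = n) \<or> (j = n - 1 \<and> x = 1 \<and> y = n - 2)"
          proof -
            have nd1: "\<not> (j = 1 \<and> x = 2 \<and> y = n)" using nD unfolding isD_def by auto
            have nd2: "\<not> (2 \<le> j \<and> j + 2 \<le> n \<and> x = 1 \<and> y = n)"
            proof
              assume H: "2 \<le> j \<and> j + 2 \<le> n \<and> x = 1 \<and> y = n"
              hence "isD n (j,j+1) (x,y)" unfolding isD_def by blast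
              thus False using nD by blast
            qed
            have nd3: "\<not> (j = n - 1 \<and> x = 1 \<and> y = n - 1)"
            proof
              assume H: "j = n - 1 \<and> x = 1 \<and> y = n - 1"
              hence "(j,j+1) = (n-1,n) \<and> (x,y) = (1,n-1)" using n4 by auto
              hence "isD n (j,j+1) (x,y)" unfolding isD_def by blast
              thus False using nD by blast
            qed
            show ?thesis using nC1 nC2 nd1 nd2 nd3 xj yj x1 j n4 by presburger
          qed
          thus ?thesis
          proof
            assume h: "j = 1 \<and> x = 3 \<and> y = n"
            have P: "(1,2) \<in> Pn n" "(2,3) \<in> Pn n" "(2,n) \<in> Pn n" "(1,3) \<in> Pn n" "(1,n) \<in> Pn n"
              using n4 by auto
            from deqD[OF d P(1,2,3)] have E1: "e (1,3) (2,n) = - e (1,2) (3,n)" using n4 by simp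
            from deqD[OF d P(1,4,5)] have E2: "0 = - e (1,2) (3,n) + e (1,3) (2,n)" using n4 by simp
            from E1 E2 show ?thesis using h by (simp add: numeral_2_eq_2)
          next
            assume h: "j = n - 1 \<and> x = 1 \<and> y = n - 2"
            have P: "(n-2,n-1) \<in> Pn n" "(n-1,n) \<in> Pn n" "(1,n-1) \<in> Pn n" "(n-2,n) \<in> Pn n" "(1,n) \<in> Pn n"
              using n4 by auto
            obtain m where m: "n = Suc (Suc (Suc (Suc m)))" proof -
              have "n = Suc (Suc (Suc (Suc (n - 4))))" using n4 by simp
              thus ?thesis using that by blast
            qed
            from deqD[OF d P(1,2,3)] have E1: "e (n-2,n) (1,n-1) = - e (n-1,n) (1,n-2)"
              unfolding m by simp
            from deqD[OF d P(4,2,5)] have E2: "0 = e (n-2,n) (1,n-1) - e (n-1,n) (1,n-2)" unfolding m by simp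
            from E1 E2 h show ?thesis unfolding m by simp
          qed
        qed
      qed
    qed
  qed
qed

lemma isD_props: "isD n s t \<Longrightarrow> 4 \<le> n \<Longrightarrow> fst t \<le> 2 \<and> n - 1 \<le> snd t \<and> snd s = fst s + 1 \<and> (fst t = 2 \<longrightarrow> s = (1,2)) \<and> (snd t = n - 1 \<longrightarrow> s = (n-1,n))"
  unfolding isD_def by auto

lemma off_zero_aux:
  "\<forall>i k t. k - i = h \<longrightarrow> (i,k) \<in> Pn n \<longrightarrow> t \<in> Pn n \<longrightarrow> t \<noteq> (i,k) \<longrightarrow> \<not> isD n (i,k) t \<longrightarrow> e (i,k) t = 0"
proof (induction h rule: less_induct)
  case (less h)
  show ?case
  proof (intro allI impI)
    fix i k t assume hk: "k - i = h" and ik: "(i,k) \<in> Pn n" and t: "t \<in> Pn n" and ne: "t \<noteq> (i,k)"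
      and nD: "\<not> isD n (i,k) t"
    obtain x y where txy: "t = (x,y)" by (cases t)
    show "e (i,k) t = 0"
    proof (cases "k = i + 1")
      case True
      thus ?thesis using gen_row[of i x y] ik t ne nD txy by auto
    next
      case False
      hence k2: "i + 2 \<le> k" using ik by auto
      have P: "(i,k-1) \<in> Pn n" "(k-1,k) \<in> Pn n" "(x,y) \<in> Pn n" using ik k2 t txy by auto
      note E = deqD[OF d P]
      have IH: "e (i,k-1) t' = 0" if "t' \<in> Pn n" "t' \<noteq> (i,k-1)" "\<not> isD n (i,k-1) t'" for t'
      proof -
        have lt: "k - 1 - i < h" using hk k2 by arith
        show ?thesis using less.IH[OF lt, rule_format, of "k-1" i t'] that P(1) by blast
      qed
      have G: "e (k-1,k) t' = 0" if "t' \<in> Pn n" "t' \<noteq> (k-1,k)" "\<not> isD n (k-1,k) t'" for t'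
        using gen_row[of "k-1" "fst t'" "snd t'"] that ik k2 by auto
      have T1: "(if k = y then e (i,k-1) (x,k-1) else 0) = 0"
      proof (cases "k = y \<and> (x, k-1) \<in> Pn n")
        case True
        have "x \<noteq> i" using ne txy True by auto
        moreover have "\<not> isD n (i,k-1) (x,k-1)" using isD_props[of "(i,k-1)" "(x,k-1)"] n4 ik by auto
        ultimately show ?thesis using IH True by auto
      qed (auto simp: ez)
      have T2: "(if x = k - 1 then e (i,k-1) (k,y) else 0) = 0"
      proof (cases "x = k - 1 \<and> (k,y) \<in> Pn n")
        case True
        moreover have "\<not> isD n (i,k-1) (k,y)" using isD_props[of "(i,k-1)" "(k,y)"] n4 ik k2 by auto
        ultimately show ?thesis using IH k2 by auto
      qed (auto simp: ez)
      have T3: "(if x = i then e (k-1,k) (k-1,y) else 0) = 0"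
      proof (cases "x = i \<and> (k-1,y) \<in> Pn n")
        case True
        have "y \<noteq> k" using ne txy True by auto
        moreover have "\<not> isD n (k-1,k) (k-1,y)" using isD_props[of "(k-1,k)" "(k-1,y)"] n4 ik k2 by auto
        ultimately show ?thesis using G True by auto
      qed (auto simp: ez)
      have T4: "(if y = k - 1 then e (k-1,k) (x,i) else 0) = 0"
      proof (cases "y = k - 1 \<and> (x,i) \<in> Pn n")
        case True
        moreover have "\<not> isD n (k-1,k) (x,i)" using isD_props[of "(k-1,k)" "(x,i)"] n4 ik k2 by auto
        ultimately show ?thesis using G k2 by auto
      qed (auto simp: ez)
      have "e (i,k) (x,y) = 0" using E T1 T2 T3 T4 k2 by simp
      thus ?thesis using txy by simp
    qed
  qed
qed

end


lemma Tn_expand: "v \<in> Tn n \<Longrightarrow> v = (\<lambda>q. \<Sum>p\<in>Pn n. v p * Eu p q)"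
proof
  fix q assume v: "v \<in> Tn n"
  have "(\<Sum>p\<in>Pn n. v p * Eu p q) = (\<Sum>p\<in>Pn n. (if p = q then v p else 0))"
    by (rule sum.cong) (auto simp: Eu_def)
  also have "\<dots> = v q" using v by (simp only: sum.delta finite_Pn) (metis Tn_iff)
  finally show "v q = (\<Sum>p\<in>Pn n. v p * Eu p q)" by simp
qed

lemma brk_lin_right:
  "brk n u (\<lambda>q. \<Sum>p\<in>P. c p * f p q) r = (\<Sum>p\<in>P. c p * brk n u (f p) r)"
proof -
  obtain x y where r: "r = (x,y)" by (cases r)
  have "brk n u (\<lambda>q. \<Sum>p\<in>P. c p * f p q) r =
    (\<Sum>j\<in>{1..n}. \<Sum>p\<in>P. c p * (u (x,j) * f p (j,y) - f p (x,j) * u (j,y)))"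
    unfolding brk_def r case_prod_conv
    by (rule sum.cong) (auto simp: sum_distrib_left sum_distrib_right sum_subtractf[symmetric] algebra_simps)
  also have "\<dots> = (\<Sum>p\<in>P. c p * brk n u (f p) r)"
    unfolding brk_def r case_prod_conv
    by (subst sum.swap) (simp add: sum_distrib_left)
  finally show ?thesis .
qed

definition adm :: "nat \<Rightarrow> (nat \<times> nat \<Rightarrow> 'a::field) \<Rightarrow> nat \<times> nat \<Rightarrow> nat \<times> nat \<Rightarrow> 'a" where
  "adm n \<mu> = (\<lambda>p q. brk n \<mu> (Eu p) q)"

lemma brk_Tn: assumes "v \<in> Tn n" "w \<in> Tn n" shows "brk n v w \<in> Tn n"
  unfolding Tn_iff
proof (intro allI impI)
  fix q assume q: "q \<notin> Pn n"
  obtain a b where ab: "q = (a,b)" by (cases q)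
  have "v (a,j) * w (j,b) - w (a,j) * v (j,b) = 0" if "j \<in> {1..n}" for j
  proof -
    have "\<not> ((a,j) \<in> Pn n \<and> (j,b) \<in> Pn n)" using q ab that by auto
    thus ?thesis using assms by (auto simp: Tn_iff)
  qed
  thus "brk n v w q = 0" unfolding brk_def ab by simp
qed

lemma linmap_Tn: "linmap n M v \<in> Tn n"
  by (simp add: linmap_def Tn_def)

lemma linmap_adm: assumes "v \<in> Tn n" shows "linmap n (adm n \<mu>) v = (\<lambda>q. if q \<in> Pn n then brk n \<mu> v q else 0)"
proof
  fix q
  have "brk n \<mu> v q = brk n \<mu> (\<lambda>q. \<Sum>p\<in>Pn n. v p * Eu p q) q" using Tn_expand[OF assms] by metis
  also have "\<dots> = (\<Sum>p\<in>Pn n. v p * brk n \<mu> (Eu p) q)" by (rule brk_lin_right)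
  finally show "linmap n (adm n \<mu>) v q = (if q \<in> Pn n then brk n \<mu> v q else 0)"
    by (simp add: linmap_def adm_def)
qed

lemma linmap_adm_Tn: assumes "v \<in> Tn n" "\<mu> \<in> Tn n" shows "linmap n (adm n \<mu>) v = brk n \<mu> v"
proof -
  have "brk n \<mu> v \<in> Tn n" using assms by (rule_tac brk_Tn) auto
  thus ?thesis unfolding linmap_adm[OF assms(1)] by (auto simp: Tn_def)
qed

definition mm :: "nat \<Rightarrow> (nat \<times> nat \<Rightarrow> 'a::field) \<Rightarrow> (nat \<times> nat \<Rightarrow> 'a) \<Rightarrow> nat \<times> nat \<Rightarrow> 'a" where
  "mm n u v = (\<lambda>(a,b). \<Sum>j\<in>{1..n}. u (a,j) * v (j,b))"

lemma brk_mm: "brk n u v q = mm n u v q - mm n v u q"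
  by (cases q) (simp add: brk_def mm_def sum_subtractf)

lemma mm_assoc: "mm n (mm n u v) w = mm n u (mm n v w)"
proof
  fix q :: "nat \<times> nat" obtain a b where q: "q = (a,b)" by (cases q)
  show "mm n (mm n u v) w q = mm n u (mm n v w) q"
    unfolding q mm_def case_prod_conv sum_distrib_left sum_distrib_right
    by (subst sum.swap) (simp add: mult.assoc)
qed

lemma mm_diff_left: "mm n (\<lambda>q. u q - v q) w = (\<lambda>q. mm n u w q - mm n v w q)"
  by (rule ext) (auto simp: mm_def sum_subtractf left_diff_distrib)
lemma mm_diff_right: "mm n w (\<lambda>q. u q - v q) = (\<lambda>q. mm n w u q - mm n w v q)"
  by (rule ext) (auto simp: mm_def sum_subtractf right_diff_distrib)
lemma mm_add_left: "mm n (\<lambda>q. u q + v q) w = (\<lambda>q. mm n u w q + mm n v w q)"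
  by (rule ext) (auto simp: mm_def sum.distrib distrib_right)
lemma mm_add_right: "mm n w (\<lambda>q. u q + v q) = (\<lambda>q. mm n w u q + mm n w v q)"
  by (rule ext) (auto simp: mm_def sum.distrib distrib_left)

lemma brk_fun: "brk n u v = (\<lambda>q. mm n u v q - mm n v u q)"
  by (rule ext) (rule brk_mm)

lemma jacobi: "brk n m (brk n v w) q = brk n (brk n m v) w q + brk n v (brk n m w) q"
proof -
  have "brk n m (brk n v w) q = mm n m (mm n v w) q - mm n m (mm n w v) q - mm n (mm n v w) m q + mm n (mm n w v) m q"
    by (simp add: brk_fun mm_diff_left mm_diff_right)
  moreover have "brk n (brk n m v) w q + brk n v (brk n m w) q =
     mm n (mm n m v) w q - mm n (mm n v m) w q - mm n w (mm n m v) q + mm n w (mm n v m) q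
     + mm n v (mm n m w) q - mm n v (mm n w m) q - mm n (mm n m w) v q + mm n (mm n w m) v q"
    by (simp add: brk_fun mm_diff_left mm_diff_right)
  ultimately show ?thesis by (simp add: mm_assoc)
qed

lemma brk_add_left: "brk n (\<lambda>q. u q + v q) w = (\<lambda>q. brk n u w q + brk n v w q)"
  by (simp add: brk_fun mm_add_left mm_add_right fun_eq_iff algebra_simps)
lemma brk_add_right: "brk n w (\<lambda>q. u q + v q) = (\<lambda>q. brk n w u q + brk n w v q)"
  by (simp add: brk_fun mm_add_left mm_add_right fun_eq_iff algebra_simps)
lemma brk_diff_left: "brk n (\<lambda>q. u q - v q) w = (\<lambda>q. brk n u w q - brk n v w q)"
  by (simp add: brk_fun mm_diff_left mm_diff_right fun_eq_iff algebra_simps)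
lemma brk_diff_right: "brk n w (\<lambda>q. u q - v q) = (\<lambda>q. brk n w u q - brk n w v q)"
  by (simp add: brk_fun mm_diff_left mm_diff_right fun_eq_iff algebra_simps)

lemma linmap_add_mat: "linmap n (\<lambda>p q. M p q + N p q) v = (\<lambda>q. linmap n M v q + linmap n N v q)"
  by (rule ext) (simp add: linmap_def sum.distrib distrib_left)

lemma linmap_cong_mat: "(\<And>p q. p \<in> Pn n \<Longrightarrow> q \<in> Pn n \<Longrightarrow> M p q = N p q) \<Longrightarrow> linmap n M = linmap n N"
  by (intro ext) (auto simp: linmap_def intro!: sum.cong)

lemma adm_deriv: assumes "\<mu> \<in> Tn n" shows "is_derivation n (adm n \<mu>)"
  unfolding is_derivation_def
proof (intro ballI)
  fix v w :: "nat \<times> nat \<Rightarrow> 'a" assume v: "v \<in> Tn n" and w: "w \<in> Tn n"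
  have vw: "brk n v w \<in> Tn n" using v w by (rule brk_Tn)
  show "linmap n (adm n \<mu>) (brk n v w) = (\<lambda>q. brk n (linmap n (adm n \<mu>) v) w q + brk n v (linmap n (adm n \<mu>) w) q)"
    unfolding linmap_adm_Tn[OF vw assms] linmap_adm_Tn[OF v assms] linmap_adm_Tn[OF w assms]
    by (rule ext) (rule jacobi)
qed

lemma deriv_add: assumes "is_derivation n A" "is_derivation n B"
  shows "is_derivation n (\<lambda>p q. A p q + B p q)"
  unfolding is_derivation_def linmap_add_mat
proof (intro ballI)
  fix v w :: "nat \<times> nat \<Rightarrow> 'a" assume v: "v \<in> Tn n" and w: "w \<in> Tn n"
  show "(\<lambda>q. linmap n A (brk n v w) q + linmap n B (brk n v w) q) =
         (\<lambda>q. brk n (\<lambda>q. linmap n A v q + linmap n B v q) w q + brk n v (\<lambda>q. linmap n A w q + linmap n B w q) q)"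
    using assms[unfolded is_derivation_def, rule_format, OF v w]
    by (simp add: brk_add_left brk_add_right fun_eq_iff)
qed

lemma deriv_cong: "is_derivation n A \<Longrightarrow> (\<And>p q. p \<in> Pn n \<Longrightarrow> q \<in> Pn n \<Longrightarrow> A' p q = A p q) \<Longrightarrow> is_derivation n A'"
  unfolding is_derivation_def using linmap_cong_mat[of n A' A] by simp



lemma linmap_add_vec: "linmap n M (\<lambda>q. u q + w q) = (\<lambda>q. linmap n M u q + linmap n M w q)"
  by (rule ext) (simp add: linmap_def sum.distrib distrib_right)
lemma linmap_diff_vec: "linmap n M (\<lambda>q. u q - w q) = (\<lambda>q. linmap n M u q - linmap n M w q)"
  by (rule ext) (simp add: linmap_def sum_subtractf left_diff_distrib)
lemma linmap_scale_vec: "linmap n M (\<lambda>q. c * u q) = (\<lambda>q. c * linmap n M u q)"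
  by (rule ext) (simp add: linmap_def sum_distrib_left mult.assoc)
lemma linmap_zero_vec: "linmap n M (\<lambda>_. 0) = (\<lambda>_. 0)"
  by (rule ext) (simp add: linmap_def)
lemma linmap_scale_mat: "linmap n (\<lambda>p q. c * M p q) v = (\<lambda>q. c * linmap n M v q)"
  by (rule ext) (simp add: linmap_def sum_distrib_left mult.left_commute)
lemma brk_scale_left: "brk n (\<lambda>q. c * u q) w = (\<lambda>q. c * brk n u w q)"
  by (rule ext) (auto simp: brk_def sum_distrib_left algebra_simps)
lemma brk_scale_right: "brk n w (\<lambda>q. c * u q) = (\<lambda>q. c * brk n w u q)"
  by (rule ext) (auto simp: brk_def sum_distrib_left algebra_simps)

lemma linmap_mat_mult: "linmap n M (linmap n N v) = linmap n (\<lambda>p s. \<Sum>r\<in>Pn n. N p r * M r s) v"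
proof
  fix q
  have "(\<Sum>r\<in>Pn n. linmap n N v r * M r q) = (\<Sum>r\<in>Pn n. \<Sum>p\<in>Pn n. v p * N p r * M r q)"
    by (rule sum.cong) (auto simp: linmap_def sum_distrib_right)
  also have "\<dots> = (\<Sum>p\<in>Pn n. v p * (\<Sum>r\<in>Pn n. N p r * M r q))"
    by (subst sum.swap) (simp add: sum_distrib_left mult.assoc)
  finally show "linmap n M (linmap n N v) q = linmap n (\<lambda>p s. \<Sum>r\<in>Pn n. N p r * M r s) v q"
    by (simp add: linmap_def)
qed



lemma step_iii_deriv:
  assumes "is_derivation n A" "\<forall>p\<in>Pn n. \<forall>q\<in>Pn n. A' p q = c * A p q"
  shows "is_derivation n A'"
proof -
  have "is_derivation n (\<lambda>p q. c * A p q)"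
    unfolding is_derivation_def linmap_scale_mat
    using assms(1)[unfolded is_derivation_def]
    by (simp add: brk_scale_left brk_scale_right fun_eq_iff distrib_left)
  thus ?thesis by (rule deriv_cong) (use assms(2) in auto)
qed

lemma step_i_deriv:
  assumes "is_derivation n A" "\<mu> \<in> Tn n" "\<forall>p\<in>Pn n. \<forall>q\<in>Pn n. A' p q = A p q + brk n \<mu> (Eu p) q"
  shows "is_derivation n A'"
proof -
  have "is_derivation n (\<lambda>p q. A p q + adm n \<mu> p q)"
    by (rule deriv_add[OF assms(1) adm_deriv[OF assms(2)]])
  thus ?thesis by (rule deriv_cong) (use assms(3) in \<open>auto simp: adm_def\<close>)
qed

lemma conj_rel:
  assumes "\<forall>p\<in>Pn n. \<forall>s\<in>Pn n. (\<Sum>r\<in>Pn n. G p r * A r s) = (\<Sum>r\<in>Pn n. A' p r * G r s)"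
  shows "linmap n A (linmap n G v) = linmap n G (linmap n A' v)"
  unfolding linmap_mat_mult
proof (rule arg_cong[where f="\<lambda>M. M v"], rule linmap_cong_mat)
  fix p q assume "p \<in> Pn n" "q \<in> Pn n"
  thus "(\<Sum>r\<in>Pn n. G p r * A r q) = (\<Sum>r\<in>Pn n. A' p r * G r q)" using assms by blast
qed

lemma Tn_eqI: "u \<in> Tn n \<Longrightarrow> w \<in> Tn n \<Longrightarrow> (\<And>q. q \<in> Pn n \<Longrightarrow> u q = w q) \<Longrightarrow> u = w"
proof
  fix q assume u: "u \<in> Tn n" and w: "w \<in> Tn n" and h: "\<And>q. q \<in> Pn n \<Longrightarrow> u q = w q"
  show "u q = w q"
  proof (cases "q \<in> Pn n")
    case False thus ?thesis using u w unfolding Tn_def mem_Collect_eq by metis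
  qed (rule h)
qed

lemma step_ii_deriv:
  assumes D: "is_derivation n A" and bij: "bij_betw (linmap n G) (Tn n) (Tn n)"
    and hom: "\<forall>v\<in>Tn n. \<forall>w\<in>Tn n. linmap n G (brk n v w) = (\<lambda>q. if q \<in> Pn n then brk n (linmap n G v) (linmap n G w) q else 0)"
    and rel: "\<forall>p\<in>Pn n. \<forall>s\<in>Pn n. (\<Sum>r\<in>Pn n. G p r * A r s) = (\<Sum>r\<in>Pn n. A' p r * G r s)"
  shows "is_derivation n A'"
  unfolding is_derivation_def
proof (intro ballI)
  fix v w :: "nat \<times> nat \<Rightarrow> 'a" assume v: "v \<in> Tn n" and w: "w \<in> Tn n"
  let ?g = "linmap n G"
  have hom': "?g (brk n x y) = brk n (?g x) (?g y)" if "x \<in> Tn n" "y \<in> Tn n" for x y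
  proof -
    have "brk n (?g x) (?g y) \<in> Tn n" by (rule brk_Tn) (rule linmap_Tn)+
    thus ?thesis unfolding hom[rule_format, OF that] by (auto simp: fun_eq_iff Tn_iff)
  qed
  have CR: "linmap n A (?g x) = ?g (linmap n A' x)" for x by (rule conj_rel[OF rel])
  have vw: "brk n v w \<in> Tn n" using v w by (rule brk_Tn)
  have "?g (linmap n A' (brk n v w)) = linmap n A (?g (brk n v w))" by (rule CR[symmetric])
  also have "\<dots> = linmap n A (brk n (?g v) (?g w))" using hom'[OF v w] by simp
  also have "\<dots> = (\<lambda>q. brk n (linmap n A (?g v)) (?g w) q + brk n (?g v) (linmap n A (?g w)) q)"
    using D[unfolded is_derivation_def, rule_format, OF linmap_Tn linmap_Tn] by blast
  also have "\<dots> = (\<lambda>q. brk n (?g (linmap n A' v)) (?g w) q + brk n (?g v) (?g (linmap n A' w)) q)"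
    by (simp add: CR)
  also have "\<dots> = (\<lambda>q. ?g (brk n (linmap n A' v) w) q + ?g (brk n v (linmap n A' w)) q)"
    using hom'[OF linmap_Tn w] hom'[OF v linmap_Tn] by simp
  also have "\<dots> = ?g (\<lambda>q. brk n (linmap n A' v) w q + brk n v (linmap n A' w) q)"
    by (simp add: linmap_add_vec)
  finally have eq: "?g (linmap n A' (brk n v w)) = ?g (\<lambda>q. brk n (linmap n A' v) w q + brk n v (linmap n A' w) q)" .
  have inT: "(\<lambda>q. brk n (linmap n A' v) w q + brk n v (linmap n A' w) q) \<in> Tn n"
    using brk_Tn[OF linmap_Tn w, of A'] brk_Tn[OF v linmap_Tn, of A'] by (auto simp: Tn_iff)
  from bij have "inj_on ?g (Tn n)" by (rule bij_betw_imp_inj_on)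
  from inj_onD[OF this eq linmap_Tn inT]
  show "linmap n A' (brk n v w) = (\<lambda>q. brk n (linmap n A' v) w q + brk n v (linmap n A' w) q)" .
qed

lemma step_deriv: "adm_step n A A' \<Longrightarrow> is_derivation n A \<Longrightarrow> is_derivation n A'"
  unfolding adm_step_def
proof (elim disjE bexE exE conjE)
  fix \<mu> assume "\<mu> \<in> Tn n" "\<forall>p\<in>Pn n. \<forall>q\<in>Pn n. A' p q = A p q + brk n \<mu> (Eu p) q" "is_derivation n A"
  thus "is_derivation n A'" by (rule_tac step_i_deriv)
next
  fix G assume "bij_betw (linmap n G) (Tn n) (Tn n)"
   "\<forall>v\<in>Tn n. \<forall>w\<in>Tn n. linmap n G (brk n v w) = (\<lambda>q. if q \<in> Pn n then brk n (linmap n G v) (linmap n G w) q else 0)"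
   "\<forall>p\<in>Pn n. \<forall>s\<in>Pn n. (\<Sum>r\<in>Pn n. G p r * A r s) = (\<Sum>r\<in>Pn n. A' p r * G r s)" "is_derivation n A"
  thus "is_derivation n A'" by (rule_tac step_ii_deriv)
next
  fix c :: 'a assume "c \<noteq> 0" "\<forall>p\<in>Pn n. \<forall>q\<in>Pn n. A' p q = c * A p q" "is_derivation n A"
  thus "is_derivation n A'" by (rule_tac step_iii_deriv)
qed

lemma admissible_deriv: "admissible n A A' \<Longrightarrow> is_derivation n A \<Longrightarrow> is_derivation n A'"
  unfolding admissible_def
  by (induction rule: rtranclp_induct) (auto intro: step_deriv)



definition Cf :: "nat \<Rightarrow> nat \<Rightarrow> (nat \<times> nat \<Rightarrow> 'a::field) set" where
  "Cf n j = {v \<in> Tn n. \<forall>a b. b - a < j \<longrightarrow> v (a,b) = 0}"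

definition nilp :: "nat \<Rightarrow> (nat \<times> nat \<Rightarrow> nat \<times> nat \<Rightarrow> 'a::field) \<Rightarrow> bool" where
  "nilp n A \<longleftrightarrow> (\<exists>m. \<forall>v\<in>Tn n. (linmap n A ^^ m) v = (\<lambda>_. 0))"

lemma deriv_height:
  assumes D: "is_derivation n A"
  shows "\<forall>i k x y. k - i = h \<longrightarrow> (i,k) \<in> Pn n \<longrightarrow> (x,y) \<in> Pn n \<longrightarrow> y - x < k - i \<longrightarrow> A (i,k) (x,y) = 0"
proof (induction h rule: less_induct)
  case (less h)
  let ?e = "ent n A"
  have d: "deq n ?e" using D by (rule deriv_deq)
  show ?case
  proof (intro allI impI)
    fix i k x y assume hk: "k - i = h" and ik: "(i,k) \<in> Pn n" and xy: "(x,y) \<in> Pn n" and lt: "y - x < k - i"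
    show "A (i,k) (x,y) = 0"
    proof (cases "k = i + 1")
      case True thus ?thesis using xy lt by auto
    next
      case False
      hence k2: "i + 2 \<le> k" using ik by auto
      have P: "(i,k-1) \<in> Pn n" "(k-1,k) \<in> Pn n" using ik k2 by auto
      note E = deqD[OF d P xy]
      have IH: "A (i,k-1) (x',y') = 0" if "(x',y') \<in> Pn n" "y' - x' < k - 1 - i" for x' y'
      proof -
        have lt2: "k - 1 - i < h" using hk k2 by arith
        show ?thesis using less.IH[OF lt2, rule_format, where i=i and k="k-1" and x=x' and y=y'] that P(1) by auto
      qed
      have T1: "(if k = y then ?e (i,k-1) (x,k-1) else 0) = 0"
        using IH[of x "k-1"] lt by (auto simp: ent_def)
      have T2: "(if x = k - 1 then ?e (i,k-1) (k,y) else 0) = 0"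
        using IH[of k y] lt k2 by (auto simp: ent_def)
      have T3: "(if x = i then ?e (k-1,k) (k-1,y) else 0) = 0"
        using lt by (auto simp: ent_def)
      have T4: "(if y = k - 1 then ?e (k-1,k) (x,i) else 0) = 0"
        using lt by (auto simp: ent_def)
      have "?e (i,k) (x,y) = 0" using E T1 T2 T3 T4 k2 by simp
      thus ?thesis using ik xy by (simp add: ent_def)
    qed
  qed
qed

lemma Cf_Tn: "v \<in> Cf n j \<Longrightarrow> v \<in> Tn n" by (simp add: Cf_def)

lemma Cf_zero: "v \<in> Cf n j \<Longrightarrow> b - a < j \<Longrightarrow> v (a,b) = 0" by (simp add: Cf_def)

lemma CfI: "v \<in> Tn n \<Longrightarrow> (\<And>a b. (a,b) \<in> Pn n \<Longrightarrow> b - a < j \<Longrightarrow> v (a,b) = 0) \<Longrightarrow> v \<in> Cf n j"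
  unfolding Cf_def by (auto simp: Tn_def)

lemma deriv_filt:
  assumes D: "is_derivation n A" and v: "v \<in> Cf n j"
  shows "linmap n A v \<in> Cf n j"
proof (rule CfI[OF linmap_Tn])
  fix a b assume ab: "(a,b) \<in> Pn n" "b - a < j"
  have "v p * A p (a,b) = 0" if "p \<in> Pn n" for p
  proof -
    obtain i k where p: "p = (i,k)" by (cases p)
    show ?thesis
    proof (cases "k - i < j")
      case True thus ?thesis using Cf_zero[OF v] p by simp
    next
      case False
      hence "b - a < k - i" using ab by arith
      thus ?thesis using deriv_height[OF D, rule_format, where i=i and k=k and x=a and y=b] p that ab by simp
    qed
  qed
  hence "(\<Sum>p\<in>Pn n. v p * A p (a,b)) = 0" by (intro sum.neutral) blast
  thus "linmap n A v (a,b) = 0" using ab by (simp add: linmap_def)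
qed

lemma brk_filt:
  assumes mu: "\<mu> \<in> Tn n" and v: "v \<in> Cf n j"
  shows "brk n \<mu> v \<in> Cf n (Suc j)"
proof (rule CfI[OF brk_Tn[OF mu Cf_Tn[OF v]]])
  fix a b assume ab: "(a,b) \<in> Pn n" "b - a < Suc j"
  have ab': "a < b" using ab by auto
  have "\<mu> (a,l) * v (l,b) - v (a,l) * \<mu> (l,b) = 0" if "l \<in> {1..n}" for l
  proof -
    have 1: "\<mu> (a,l) * v (l,b) = 0"
    proof (cases "a < l")
      case True hence "b - l < j" using ab(2) ab' by arith
      thus ?thesis using Cf_zero[OF v] by simp
    next
      case False thus ?thesis using mu by (auto simp: Tn_def)
    qed
    have 2: "v (a,l) * \<mu> (l,b) = 0"
    proof (cases "l < b")
      case True hence "l - a < j" using ab(2) ab' by arith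
      thus ?thesis using Cf_zero[OF v] by simp
    next
      case False thus ?thesis using mu by (auto simp: Tn_def)
    qed
    show ?thesis unfolding 1 2 by simp
  qed
  thus "brk n \<mu> v (a,b) = 0" by (simp add: brk_def)
qed

lemma Cf_diff: "u \<in> Cf n j \<Longrightarrow> w \<in> Cf n j \<Longrightarrow> (\<lambda>q. u q - w q) \<in> Cf n j"
  unfolding Cf_def Tn_def by auto

lemma Cf_mono: "u \<in> Cf n (Suc j) \<Longrightarrow> u \<in> Cf n j"
  unfolding Cf_def by auto

lemma Cf_one: "v \<in> Tn n \<Longrightarrow> v \<in> Cf n 1"
  by (rule CfI) auto

lemma Cf_top: "v \<in> Cf n n \<Longrightarrow> v = (\<lambda>_. 0)"
proof
  fix q :: "nat \<times> nat" assume v: "v \<in> Cf n n"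
  obtain a b where q: "q = (a,b)" by (cases q)
  show "v q = 0"
  proof (cases "(a,b) \<in> Pn n")
    case True hence "b - a < n" by auto
    thus ?thesis using Cf_zero[OF v] q by simp
  next
    case False thus ?thesis using Cf_Tn[OF v] q unfolding Tn_def by auto
  qed
qed

lemma step_i_nilp:
  assumes D: "is_derivation n A" and mu: "\<mu> \<in> Tn n"
    and rel: "\<forall>p\<in>Pn n. \<forall>q\<in>Pn n. A' p q = A p q + brk n \<mu> (Eu p) q"
    and N: "nilp n A'"
  shows "nilp n A"
proof -
  have D': "is_derivation n A'" using step_i_deriv[OF D mu rel] .
  let ?L = "linmap n A" and ?L' = "linmap n A'"
  have L': "?L' v = (\<lambda>q. ?L v q + brk n \<mu> v q)" if "v \<in> Tn n" for v
  proof -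
    have "?L' = linmap n (\<lambda>p q. A p q + adm n \<mu> p q)"
      by (rule linmap_cong_mat) (use rel in \<open>auto simp: adm_def\<close>)
    thus ?thesis using linmap_adm_Tn[OF that mu] by (simp add: linmap_add_mat)
  qed
  have pres: "(?L' ^^ k) v \<in> Cf n j" if "v \<in> Cf n j" for v k j
    using that by (induction k) (auto intro: deriv_filt[OF D'])
  have claim: "(\<lambda>q. (?L ^^ k) v q - (?L' ^^ k) v q) \<in> Cf n (Suc j)" if v: "v \<in> Cf n j" for v k j
  proof (induction k)
    case 0 show ?case by (simp add: Cf_def Tn_def)
  next
    case (Suc k)
    let ?a = "(?L ^^ k) v" and ?b = "(?L' ^^ k) v"
    have b: "?b \<in> Cf n j" using pres[OF v] .
    have "(?L ^^ Suc k) v = ?L ?a" by simp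
    moreover have "(?L' ^^ Suc k) v = (\<lambda>q. ?L ?b q + brk n \<mu> ?b q)" using L'[OF Cf_Tn[OF b]] by simp
    ultimately have eq: "(\<lambda>q. (?L ^^ Suc k) v q - (?L' ^^ Suc k) v q) = (\<lambda>q. ?L (\<lambda>q. ?a q - ?b q) q - brk n \<mu> ?b q)"
      by (simp add: linmap_diff_vec fun_eq_iff)
    show ?case unfolding eq
      by (rule Cf_diff[OF deriv_filt[OF D Suc.IH] brk_filt[OF mu b]])
  qed
  from N obtain m where m: "\<forall>v\<in>Tn n. (?L' ^^ m) v = (\<lambda>_. 0)" unfolding nilp_def by blast
  have step: "(?L ^^ m) v \<in> Cf n (Suc j)" if "v \<in> Cf n j" for v j
    using claim[OF that, of m] m Cf_Tn[OF that] by simp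
  have iter: "(?L ^^ (m * t)) v \<in> Cf n (Suc t)" if "v \<in> Tn n" for v t
  proof (induction t)
    case 0 show ?case using Cf_one[OF that] by simp
  next
    case (Suc t)
    have "(?L ^^ (m * Suc t)) v = (?L ^^ m) ((?L ^^ (m * t)) v)"
      by (simp add: funpow_add)
    thus ?case using step[OF Suc.IH] by simp
  qed
  have "(?L ^^ (m * n)) v = (\<lambda>_. 0)" if "v \<in> Tn n" for v
    using Cf_top[OF Cf_mono[OF iter[OF that, of n]]] .
  thus ?thesis unfolding nilp_def by blast
qed

lemma funpow_conj: assumes "\<And>x. f (g x) = g (h x)" shows "(f ^^ k) (g x) = g ((h ^^ k) x)"
  by (induction k) (simp_all add: assms)

lemma step_ii_nilp:
  assumes bij: "bij_betw (linmap n G) (Tn n) (Tn n)"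
    and rel: "\<forall>p\<in>Pn n. \<forall>s\<in>Pn n. (\<Sum>r\<in>Pn n. G p r * A r s) = (\<Sum>r\<in>Pn n. A' p r * G r s)"
    and N: "nilp n A'"
  shows "nilp n A"
proof -
  from N obtain m where m: "\<forall>v\<in>Tn n. (linmap n A' ^^ m) v = (\<lambda>_. 0)" unfolding nilp_def by blast
  have "(linmap n A ^^ m) u = (\<lambda>_. 0)" if u: "u \<in> Tn n" for u
  proof -
    obtain v where v: "v \<in> Tn n" "u = linmap n G v" using bij u unfolding bij_betw_def by auto
    have "(linmap n A ^^ m) (linmap n G v) = linmap n G ((linmap n A' ^^ m) v)"
      by (rule funpow_conj[where f="linmap n A" and g="linmap n G" and h="linmap n A'"]) (rule conj_rel[OF rel])
    thus ?thesis using v m by (simp add: linmap_zero_vec)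
  qed
  thus ?thesis unfolding nilp_def by blast
qed

lemma step_iii_nilp:
  assumes c: "c \<noteq> 0" and rel: "\<forall>p\<in>Pn n. \<forall>q\<in>Pn n. A' p q = c * A p q" and N: "nilp n A'"
  shows "nilp n A"
proof -
  have L: "linmap n A' = (\<lambda>v q. c * linmap n A v q)"
  proof -
    have "linmap n A' = linmap n (\<lambda>p q. c * A p q)" by (rule linmap_cong_mat) (use rel in auto)
    thus ?thesis by (simp add: linmap_scale_mat fun_eq_iff)
  qed
  have pw: "(linmap n A' ^^ k) v = (\<lambda>q. c ^ k * (linmap n A ^^ k) v q)" for k v
  proof (induction k)
    case (Suc k)
    have "(linmap n A' ^^ Suc k) v = linmap n A' ((linmap n A' ^^ k) v)" by simp
    also have "\<dots> = (\<lambda>q. c * linmap n A ((linmap n A' ^^ k) v) q)" by (simp add: L)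
    also have "\<dots> = (\<lambda>q. c * linmap n A (\<lambda>q. c ^ k * (linmap n A ^^ k) v q) q)" by (simp only: Suc.IH)
    also have "\<dots> = (\<lambda>q. c ^ Suc k * (linmap n A ^^ Suc k) v q)" by (simp add: linmap_scale_vec mult.assoc)
    finally show ?case .
  qed simp
  from N obtain m where m: "\<forall>v\<in>Tn n. (linmap n A' ^^ m) v = (\<lambda>_. 0)" unfolding nilp_def by blast
  have "(linmap n A ^^ m) v = (\<lambda>_. 0)" if "v \<in> Tn n" for v
    using m that c unfolding pw by (auto simp: fun_eq_iff)
  thus ?thesis unfolding nilp_def by blast
qed

lemma step_nilp: "adm_step n A A' \<Longrightarrow> is_derivation n A \<Longrightarrow> nilp n A' \<Longrightarrow> nilp n A"
  unfolding adm_step_def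
proof (elim disjE bexE exE conjE)
  fix \<mu> assume "\<mu> \<in> Tn n" "\<forall>p\<in>Pn n. \<forall>q\<in>Pn n. A' p q = A p q + brk n \<mu> (Eu p) q" "is_derivation n A" "nilp n A'"
  thus "nilp n A" by (rule_tac step_i_nilp)
next
  fix G assume "bij_betw (linmap n G) (Tn n) (Tn n)"
   "\<forall>p\<in>Pn n. \<forall>s\<in>Pn n. (\<Sum>r\<in>Pn n. G p r * A r s) = (\<Sum>r\<in>Pn n. A' p r * G r s)" "nilp n A'"
  thus "nilp n A" by (rule_tac step_ii_nilp)
next
  fix c :: 'a assume "c \<noteq> 0" "\<forall>p\<in>Pn n. \<forall>q\<in>Pn n. A' p q = c * A p q" "nilp n A'"
  thus "nilp n A" by (rule_tac step_iii_nilp)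
qed

lemma admissible_nilp: "admissible n A A' \<Longrightarrow> is_derivation n A \<Longrightarrow> nilp n A' \<Longrightarrow> nilp n A"
  unfolding admissible_def
proof (induction rule: rtranclp_induct)
  case (step y z)
  have "is_derivation n y" using step.hyps(1) step.prems(1) admissible_deriv unfolding admissible_def by blast
  thus ?case using step by (blast intro: step_nilp)
qed simp



definition muB :: "nat \<Rightarrow> (nat \<times> nat \<Rightarrow> nat \<times> nat \<Rightarrow> 'a::field) \<Rightarrow> nat \<times> nat \<Rightarrow> 'a" where
  "muB n B = (\<lambda>(a,b). if (a,b) \<in> Pn n then (if 2 \<le> a then B (a-1,a) (a-1,b) else if b < n then - B (b,b+1) (1,b+1) else 0) else 0)"

definition B1of :: "nat \<Rightarrow> (nat \<times> nat \<Rightarrow> nat \<times> nat \<Rightarrow> 'a::field) \<Rightarrow> nat \<times> nat \<Rightarrow> nat \<times> nat \<Rightarrow> 'a" where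
  "B1of n B = (\<lambda>p q. B p q + brk n (muB n B) (Eu p) q)"

lemma muB_Tn: "muB n B \<in> Tn n"
  unfolding Tn_def muB_def by auto

lemma B1_step: "adm_step n B (B1of n B)"
  unfolding adm_step_def B1of_def using muB_Tn by blast

lemma brk_mu_gen:
  assumes "(a,b) \<in> Pn n"
  shows "brk n \<mu> (Eu (a,b)) (x,y) = (if b = y then \<mu> (x,a) else 0) - (if x = a then \<mu> (b,y) else 0)"
  using assms by (intro brk_Eu_right) auto

lemma B1_structure:
  fixes B :: "nat \<times> nat \<Rightarrow> nat \<times> nat \<Rightarrow> 'a::field_char_0"
  assumes n4: "4 \<le> n" and D: "is_derivation n B" and s: "s \<in> Pn n" and t: "t \<in> Pn n"
  shows "B1of n B s t = (if s = t then B s s else if isD n s t then B s t else 0)"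
proof -
  let ?m = "muB n B" and ?B1 = "B1of n B"
  have D1: "is_derivation n ?B1" using step_deriv[OF B1_step D] .
  let ?e = "ent n ?B1"
  have dq: "deq n ?e" using deriv_deq[OF D1] .
  interpret dctx n ?e
  proof
    show "4 \<le> n" by fact
    show "deq n ?e" by fact
  next
    fix a b :: nat assume h: "2 \<le> a" "a < b" "b \<le> n"
    have P: "(a-1,a) \<in> Pn n" "(a-1,b) \<in> Pn n" using h by auto
    have "brk n ?m (Eu (a-1,a)) (a-1,b) = - ?m (a,b)"
      using brk_mu_gen[OF P(1), of ?m "a-1" b] h by simp
    also have "\<dots> = - B (a-1,a) (a-1,b)" using h by (simp add: muB_def)
    finally show "?e (a-1,a) (a-1,b) = 0" using P by (simp add: ent_def B1of_def)
  next
    fix b :: nat assume h: "1 < b" "b < n"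
    have P: "(b,b+1) \<in> Pn n" "(1,b+1) \<in> Pn n" using h by auto
    have "brk n ?m (Eu (b,b+1)) (1,b+1) = ?m (1,b)"
      using brk_mu_gen[OF P(1), of ?m 1 "b+1"] h by simp
    also have "\<dots> = - B (b,b+1) (1,b+1)" using h by (simp add: muB_def)
    finally show "?e (b,b+1) (1,b+1) = 0" using P by (simp add: ent_def B1of_def)
  next
    fix s t :: "nat \<times> nat" assume "s \<notin> Pn n \<or> t \<notin> Pn n"
    thus "?e s t = 0" by (auto simp: ent_def)
  qed
  obtain i k where sik: "s = (i,k)" by (cases s)
  obtain x y where txy: "t = (x,y)" by (cases t)
  show ?thesis
  proof (cases "s = t")
    case True
    have "brk n ?m (Eu (i,k)) (i,k) = 0"
      using brk_mu_gen[of i k n ?m i k] s sik muB_Tn[of n B] by (simp add: Tn_def)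
    thus ?thesis using True sik by (simp add: B1of_def)
  next
    case ne: False
    show ?thesis
    proof (cases "isD n s t")
      case True
      have "brk n ?m (Eu (i,k)) (x,y) = 0"
        using True sik txy brk_mu_gen[of i k n ?m x y] s n4 unfolding isD_def by auto
      thus ?thesis using True ne sik txy by (simp add: B1of_def)
    next
      case False
      have "?e s t = 0" using off_zero_aux[rule_format, where i=i and k=k and t=t] s t ne False sik by auto
      thus ?thesis using False ne s t by (simp add: ent_def)
    qed
  qed
qed



definition tgt :: "nat \<Rightarrow> nat \<Rightarrow> nat \<times> nat" where
  "tgt n j = (if j = 1 then (2,n) else if j = n - 1 then (1,n-1) else (1,n))"

lemma isD_tgt: assumes "4 \<le> n"
  shows "isD n s t \<longleftrightarrow> (\<exists>j. 1 \<le> j \<and> j < n \<and> s = (j,j+1) \<and> t = tgt n j)"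
proof
  assume "isD n s t"
  then consider "s = (1,2) \<and> t = (2,n)" | i where "2 \<le> i" "i + 2 \<le> n" "s = (i,i+1)" "t = (1,n)"
    | "s = (n-1,n) \<and> t = (1,n-1)" unfolding isD_def by blast
  thus "\<exists>j. 1 \<le> j \<and> j < n \<and> s = (j,j+1) \<and> t = tgt n j"
  proof cases
    case 1 thus ?thesis using assms by (intro exI[of _ 1]) (auto simp: tgt_def)
  next
    case (2 i) thus ?thesis using assms by (intro exI[of _ i]) (auto simp: tgt_def)
  next
    case 3 thus ?thesis using assms by (intro exI[of _ "n-1"]) (auto simp: tgt_def)
  qed
next
  assume "\<exists>j. 1 \<le> j \<and> j < n \<and> s = (j,j+1) \<and> t = tgt n j"
  then obtain j where j: "1 \<le> j" "j < n" "s = (j,j+1)" "t = tgt n j" by blast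
  show "isD n s t"
  proof (cases "j = 1")
    case True thus ?thesis using j unfolding isD_def tgt_def by auto
  next
    case False
    show ?thesis
    proof (cases "j = n - 1")
      case True thus ?thesis using j False assms unfolding isD_def tgt_def by auto
    next
      case False2: False
      hence "2 \<le> j \<and> j + 2 \<le> n \<and> s = (j,j+1) \<and> t = (1,n)" using j False unfolding tgt_def by auto
      thus ?thesis unfolding isD_def by blast
    qed
  qed
qed

lemma tgt_Pn: "4 \<le> n \<Longrightarrow> 1 \<le> j \<Longrightarrow> j < n \<Longrightarrow> tgt n j \<in> Pn n"
  by (auto simp: tgt_def)

lemma tgt_not_gen: "4 \<le> n \<Longrightarrow> 1 \<le> j \<Longrightarrow> j < n \<Longrightarrow> tgt n j \<noteq> (l, l+1)"
  by (auto simp: tgt_def)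

lemma isD_Pn: assumes "4 \<le> n" "isD n s t" shows "s \<in> Pn n \<and> t \<in> Pn n \<and> s \<noteq> t"
proof -
  obtain j where j: "1 \<le> j" "j < n" "s = (j,j+1)" "t = tgt n j" using assms isD_tgt by blast
  show ?thesis using tgt_Pn[OF assms(1) j(1,2)] tgt_not_gen[OF assms(1) j(1,2), of j] j by auto
qed

lemma isD_gen_target: "4 \<le> n \<Longrightarrow> \<not> isD n s (l,l+1)"
  by (auto simp: isD_tgt tgt_def)

lemma isD_tgt_row: "4 \<le> n \<Longrightarrow> 1 \<le> j \<Longrightarrow> j < n \<Longrightarrow> \<not> isD n (tgt n j) t"
  by (auto simp: isD_tgt tgt_def)

definition Gm :: "nat \<Rightarrow> nat \<Rightarrow> 'a::field \<Rightarrow> nat \<times> nat \<Rightarrow> nat \<times> nat \<Rightarrow> 'a" where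
  "Gm n j a = (\<lambda>p q. (if p = q then 1 else 0) + (if p = (j,j+1) \<and> q = tgt n j then a else 0))"

lemma linmap_Gm:
  assumes n4: "4 \<le> n" and j: "1 \<le> j" "j < n" and v: "v \<in> Tn n"
  shows "linmap n (Gm n j a) v = (\<lambda>q. v q + (a * v (j,j+1)) * Eu (tgt n j) q)"
proof
  fix q
  have t0: "tgt n j \<in> Pn n" "(j,j+1) \<in> Pn n" using tgt_Pn[OF n4 j] j by auto
  have "(\<Sum>p\<in>Pn n. v p * Gm n j a p q) = (\<Sum>p\<in>Pn n. (if p = q then v p else 0) + (if p = (j,j+1) then (if q = tgt n j then a * v p else 0) else 0))"
    by (rule sum.cong) (auto simp: Gm_def algebra_simps)
  also have "\<dots> = (if q \<in> Pn n then v q else 0) + (if q = tgt n j then a * v (j,j+1) else 0)"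
    using t0 by (simp add: sum.distrib sum.delta')
  moreover have "q \<notin> Pn n \<Longrightarrow> v q = 0" using v by (metis Tn_iff)
  ultimately show "linmap n (Gm n j a) v q = v q + (a * v (j,j+1)) * Eu (tgt n j) q"
    using t0 unfolding linmap_def Eu_def by auto
qed

lemma brk_gen_zero: "brk n v w (j,j+1) = 0" if "v \<in> Tn n" "w \<in> Tn n"
proof -
  have "v (j,l) * w (l,j+1) - w (j,l) * v (l,j+1) = 0" for l
  proof (cases "j < l")
    case True
    hence "w (l,j+1) = 0" "v (l,j+1) = 0" using that by (auto simp: Tn_def)
    thus ?thesis by simp
  next
    case False
    hence "w (j,l) = 0" "v (j,l) = 0" using that by (auto simp: Tn_def)
    thus ?thesis by simp
  qed
  thus ?thesis by (simp add: brk_def)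
qed

lemma Gm_hom:
  assumes n4: "4 \<le> n" and j: "1 \<le> j" "j < n" and v: "v \<in> Tn n" and w: "w \<in> Tn n"
  shows "linmap n (Gm n j a) (brk n v w) = (\<lambda>q. if q \<in> Pn n then brk n (linmap n (Gm n j a) v) (linmap n (Gm n j a) w) q else 0)"
proof -
  let ?t = "tgt n j" and ?p = "(j,j+1)"
  let ?E = "Eu ?t :: nat \<times> nat \<Rightarrow> 'a"
  have vw: "brk n v w \<in> Tn n" using v w by (rule brk_Tn)
  obtain c d where cd: "?t = (c,d)" by (cases "?t")
  have cdn: "c \<in> {1..n}" "d \<in> {1..n}" using tgt_Pn[OF n4 j] cd by auto
  have Ebrk: "brk n ?E ?E = (\<lambda>_. 0)"
    using tgt_Pn[OF n4 j] unfolding cd by (intro ext) (auto simp: brk_Eu_Eu)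
  have key: "a * w ?p * brk n v ?E q + a * v ?p * brk n ?E w q = 0" for q
  proof -
    obtain x y where q: "q = (x,y)" by (cases q)
    have z: "v (l,1) = 0" "w (l,1) = 0" "v (n,l) = 0" "w (n,l) = 0" for l using v w by (auto simp: Tn_def)
    have L: "brk n v ?E (x,y) = (if d = y then v (x,c) else 0) - (if x = c then v (d,y) else 0)"
      unfolding cd by (rule brk_Eu_right[OF cdn])
    have R: "brk n ?E w (x,y) = (if x = c then w (d,y) else 0) - (if y = d then w (x,c) else 0)"
      unfolding cd by (rule brk_Eu_left[OF cdn])
    consider "j = 1" | "j = n - 1" | "j \<noteq> 1" "j \<noteq> n - 1" by blast
    thus ?thesis
    proof cases
      case 1
      hence "(c,d) = (2,n)" using cd by (simp add: tgt_def)
      hence "c = 2" "d = n" by auto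
      moreover have p: "?p = (1,2)" using 1 by simp
      moreover have "v (x,2) = (if x = 1 then v (1,2) else 0)" "w (x,2) = (if x = 1 then w (1,2) else 0)"
        using v w by (auto simp: Tn_def)
      ultimately show ?thesis unfolding q L R p using z by (auto simp: algebra_simps)
    next
      case 2
      have "n - 1 \<noteq> 1" using n4 by arith
      hence "tgt n j = (1,n-1)" using 2 unfolding tgt_def by simp
      hence cd2: "(c,d) = (1,n-1)" using cd by simp
      have "c = 1" "d = n - 1" using cd2 by simp_all
      moreover have ny: "y \<noteq> n \<Longrightarrow> (n-1,y) \<notin> Pn n" by auto
      have "v (n-1,y) = (if y = n then v (n-1,n) else 0)" "w (n-1,y) = (if y = n then w (n-1,n) else 0)"
        using v w ny by (auto simp del: Pn_iff simp: Tn_iff)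
      ultimately show ?thesis unfolding q L R using z 2 n4 by (auto simp: algebra_simps)
    next
      case 3
      hence "(c,d) = (1,n)" using cd by (simp add: tgt_def)
      thus ?thesis unfolding q L R using z by auto
    qed
  qed
  have lhs: "linmap n (Gm n j a) (brk n v w) = brk n v w"
    unfolding linmap_Gm[OF n4 j vw] brk_gen_zero[OF v w] by simp
  have rhs: "brk n (linmap n (Gm n j a) v) (linmap n (Gm n j a) w) = brk n v w"
    unfolding linmap_Gm[OF n4 j v] linmap_Gm[OF n4 j w]
  apply (simp only: brk_add_left brk_add_right brk_scale_left brk_scale_right Ebrk, rule ext)
  using key apply (simp add: algebra_simps)
  done
  show ?thesis unfolding lhs rhs using vw by (auto simp: Tn_def fun_eq_iff)
qed

lemma Gm_val: assumes "4 \<le> n" "1 \<le> j" "j < n" "v \<in> Tn n"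
  shows "linmap n (Gm n j a) v (j,j+1) = v (j,j+1)"
  using tgt_not_gen[OF assms(1-3), of j] by (simp add: linmap_Gm[OF assms] Eu_def)

lemma Gm_bij: fixes a :: "'a::field" assumes n4: "4 \<le> n" and j: "1 \<le> j" "j < n"
  shows "bij_betw (linmap n (Gm n j a)) (Tn n) (Tn n)"
proof (rule bij_betw_byWitness[where f'="linmap n (Gm n j (-a))"])
  show "\<forall>v\<in>Tn n. linmap n (Gm n j (-a)) (linmap n (Gm n j a) v) = v"
  proof
    fix v :: "nat \<times> nat \<Rightarrow> 'a" assume v: "v \<in> Tn n"
    have "linmap n (Gm n j (-a)) (linmap n (Gm n j a) v) = (\<lambda>q. linmap n (Gm n j a) v q + (- a * linmap n (Gm n j a) v (j,j+1)) * Eu (tgt n j) q)"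
      by (rule linmap_Gm[OF n4 j linmap_Tn])
    also have "\<dots> = v" unfolding Gm_val[OF n4 j v] unfolding linmap_Gm[OF n4 j v]
      by (simp add: fun_eq_iff algebra_simps)
    finally show "linmap n (Gm n j (-a)) (linmap n (Gm n j a) v) = v" .
  qed
  show "\<forall>v\<in>Tn n. linmap n (Gm n j a) (linmap n (Gm n j (-a)) v) = v"
  proof
    fix v :: "nat \<times> nat \<Rightarrow> 'a" assume v: "v \<in> Tn n"
    have "linmap n (Gm n j a) (linmap n (Gm n j (-a)) v) = (\<lambda>q. linmap n (Gm n j (-a)) v q + (a * linmap n (Gm n j (-a)) v (j,j+1)) * Eu (tgt n j) q)"
      by (rule linmap_Gm[OF n4 j linmap_Tn])
    also have "\<dots> = v" unfolding Gm_val[OF n4 j v] unfolding linmap_Gm[OF n4 j v]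
      by (simp add: fun_eq_iff algebra_simps)
    finally show "linmap n (Gm n j a) (linmap n (Gm n j (-a)) v) = v" .
  qed
qed (auto intro: linmap_Tn)

lemma Gm_left: assumes "p \<in> Pn n" "4 \<le> n" "1 \<le> j" "j < n"
  shows "(\<Sum>r\<in>Pn n. Gm n j a p r * X r) = X p + (if p = (j,j+1) then a * X (tgt n j) else 0)"
proof -
  have "(\<Sum>r\<in>Pn n. Gm n j a p r * X r) = (\<Sum>r\<in>Pn n. (if r = p then X r else 0) + (if r = tgt n j then (if p = (j,j+1) then a * X r else 0) else 0))"
    by (rule sum.cong) (auto simp: Gm_def algebra_simps)
  also have "\<dots> = X p + (if p = (j,j+1) then a * X (tgt n j) else 0)"
    using assms tgt_Pn[OF assms(2-4)] by (simp add: sum.distrib)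
  finally show ?thesis .
qed

lemma Gm_right: assumes "s \<in> Pn n" "4 \<le> n" "1 \<le> j" "j < n"
  shows "(\<Sum>r\<in>Pn n. Y r * Gm n j a r s) = Y s + (if s = tgt n j then Y (j,j+1) * a else 0)"
proof -
  have "(\<Sum>r\<in>Pn n. Y r * Gm n j a r s) = (\<Sum>r\<in>Pn n. (if r = s then Y r else 0) + (if r = (j,j+1) then (if s = tgt n j then Y r * a else 0) else 0))"
    by (rule sum.cong) (auto simp: Gm_def algebra_simps)
  also have "\<dots> = Y s + (if s = tgt n j then Y (j,j+1) * a else 0)"
    using assms by (simp add: sum.distrib)
  finally show ?thesis .
qed

lemma conj_remove:
  fixes B1 :: "nat \<times> nat \<Rightarrow> nat \<times> nat \<Rightarrow> 'a::field"
  assumes n4: "4 \<le> n" and j: "1 \<le> j" "j < n"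
    and shape: "\<forall>s\<in>Pn n. \<forall>t\<in>Pn n. B1 s t = (if s = t then d s else if isD n s t then B1 s t else 0)"
    and dne: "d (tgt n j) \<noteq> d (j,j+1)"
  shows "\<exists>B2. adm_step n B1 B2 \<and> (\<forall>s\<in>Pn n. \<forall>t\<in>Pn n. B2 s t = (if s = (j,j+1) \<and> t = tgt n j then 0 else B1 s t))"
proof -
  let ?p = "(j,j+1)" and ?t = "tgt n j"
  define a where "a = B1 ?p ?t / (d ?p - d ?t)"
  define B2 where "B2 = (\<lambda>s t. if s = ?p \<and> t = ?t then 0 else B1 s t)"
  have tP: "?t \<in> Pn n" "?p \<in> Pn n" using tgt_Pn[OF n4 j] j by auto
  have pt: "?p \<noteq> ?t" using tgt_not_gen[OF n4 j, of j] by auto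
  have rowt: "B1 ?t s = (if s = ?t then d ?t else 0)" if "s \<in> Pn n" for s
  proof -
    have "\<not> isD n ?t s" by (rule isD_tgt_row[OF n4 j])
    thus ?thesis using shape[rule_format, OF tP(1) that] by auto
  qed
  have colp: "B1 s ?p = (if s = ?p then d ?p else 0)" if "s \<in> Pn n" for s
    using shape[rule_format, OF that tP(2)] isD_gen_target[OF n4] by auto
  have rel: "(\<Sum>r\<in>Pn n. Gm n j a p r * B1 r s) = (\<Sum>r\<in>Pn n. B2 p r * Gm n j a r s)"
    if p: "p \<in> Pn n" and s: "s \<in> Pn n" for p s
  proof -
    have "(\<Sum>r\<in>Pn n. Gm n j a p r * B1 r s) = B1 p s + (if p = ?p then a * B1 ?t s else 0)"
      by (rule Gm_left[OF p n4 j])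
    moreover have "(\<Sum>r\<in>Pn n. B2 p r * Gm n j a r s) = B2 p s + (if s = ?t then B2 p ?p * a else 0)"
      by (rule Gm_right[OF s n4 j])
    moreover have "B2 p ?p = B1 p ?p" using pt by (simp add: B2_def)
    moreover have "d ?p - d ?t \<noteq> 0" using dne by simp
    ultimately show ?thesis using rowt[OF s] colp[OF p]
      by (auto simp: B2_def a_def field_simps)
  qed
  have "adm_step n B1 B2"
    unfolding adm_step_def using Gm_bij[OF n4 j, of a] Gm_hom[OF n4 j] rel by blast
  moreover have "\<forall>s\<in>Pn n. \<forall>t\<in>Pn n. B2 s t = (if s = ?p \<and> t = ?t then 0 else B1 s t)"
    by (simp add: B2_def)
  ultimately show ?thesis by blast
qed



lemma diag_add:
  assumes D: "is_derivation n B" and h: "1 \<le> i" "i < k" "k < b" "b \<le> n"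
  shows "B (i,b) (i,b) = B (i,k) (i,k) + B (k,b) (k,b)"
proof -
  have P: "(i,k) \<in> Pn n" "(k,b) \<in> Pn n" "(i,b) \<in> Pn n" using h by auto
  from deqD[OF deriv_deq[OF D] P] show ?thesis using h P by (simp add: ent_def)
qed

lemma diag_sum:
  assumes D: "is_derivation n B" and h: "1 \<le> i" "i < k" "k \<le> n"
  shows "B (i,k) (i,k) = (\<Sum>l\<in>{i..<k}. B (l,l+1) (l,l+1))"
  using h
proof (induction k)
  case 0 thus ?case by simp
next
  case (Suc k)
  show ?case
  proof (cases "i = k")
    case True thus ?thesis by simp
  next
    case False
    hence ik: "i < k" using Suc by simp
    have "B (i,Suc k) (i,Suc k) = B (i,k) (i,k) + B (k,Suc k) (k,Suc k)"
      using diag_add[OF D, of i k "Suc k"] ik Suc.prems by simp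
    also have "B (i,k) (i,k) = (\<Sum>l\<in>{i..<k}. B (l,l+1) (l,l+1))" using Suc.IH ik Suc.prems by simp
    finally show ?thesis using ik by simp
  qed
qed

lemma diag_zero:
  fixes B :: "nat \<times> nat \<Rightarrow> nat \<times> nat \<Rightarrow> 'a::field_char_0"
  assumes n4: "4 \<le> n" and D: "is_derivation n B"
    and eq: "\<forall>j. 1 \<le> j \<and> j < n \<longrightarrow> B (tgt n j) (tgt n j) = B (j,j+1) (j,j+1)"
    and s: "s \<in> Pn n"
  shows "B s s = 0"
proof -
  define x where "x l = B (l,l+1) (l,l+1)" for l
  define T where "T = (\<Sum>l\<in>{1..<n}. x l)"
  have ds: "B (i,k) (i,k) = (\<Sum>l\<in>{i..<k}. x l)" if "1 \<le> i" "i < k" "k \<le> n" for i k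
    using diag_sum[OF D that] by (simp add: x_def)
  have e1: "B (2,n) (2,n) = x 1" using eq[rule_format, of 1] n4 by (simp add: tgt_def x_def)
  have n1: "n - 1 \<noteq> 1" using n4 by arith
  have e2: "B (1,n-1) (1,n-1) = x (n-1)" using eq[rule_format, of "n-1"] n4 n1 by (simp add: tgt_def x_def)
  have e3: "x l = T" if "2 \<le> l" "l + 2 \<le> n" for l
  proof -
    have "l \<noteq> n - 1" "l \<noteq> 1" using that by arith+
    hence "tgt n l = (1,n)" by (simp add: tgt_def)
    hence "B (1,n) (1,n) = x l" using eq[rule_format, of l] that by (simp add: x_def)
    thus ?thesis using ds[of 1 n] n4 by (simp add: T_def)
  qed
  have s1: "T = x 1 + (\<Sum>l\<in>{2..<n}. x l)"
    unfolding T_def using n4 by (subst sum.atLeast_Suc_lessThan) (simp_all add: numeral_2_eq_2)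
  have s2: "(\<Sum>l\<in>{2..<n}. x l) = (\<Sum>l\<in>{2..<n-1}. x l) + x (n-1)"
  proof -
    have "(\<Sum>l\<in>{2..<n}. x l) = (\<Sum>l\<in>{2..<Suc (n-1)}. x l)" using n4 by simp
    also have "\<dots> = (\<Sum>l\<in>{2..<n-1}. x l) + x (n-1)" using n4 by (subst sum.atLeastLessThan_Suc) auto
    finally show ?thesis .
  qed
  have s3: "(\<Sum>l\<in>{2..<n-1}. x l) = of_nat (n - 3) * T"
  proof -
    have "(\<Sum>l\<in>{2..<n-1}. x l) = (\<Sum>l\<in>{2..<n-1}. T)" by (rule sum.cong) (auto intro: e3)
    also have "\<dots> = of_nat (n-3) * T" by (simp add: numeral_3_eq_3)
    finally show ?thesis .
  qed
  have s4: "T = (\<Sum>l\<in>{1..<n-1}. x l) + x (n-1)"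
  proof -
    have "(\<Sum>l\<in>{1..<n}. x l) = (\<Sum>l\<in>{1..<Suc (n-1)}. x l)" using n4 by simp
    also have "\<dots> = (\<Sum>l\<in>{1..<n-1}. x l) + x (n-1)" using n4 by (subst sum.atLeastLessThan_Suc) auto
    finally show ?thesis unfolding T_def .
  qed
  have x1: "T = 2 * x 1" using s1 e1 ds[of 2 n] n4 by simp
  have xn: "T = 2 * x (n-1)" using s4 e2 ds[of 1 "n-1"] n4 by simp
  have h: "T = x 1 + of_nat (n-3) * T + x (n-1)" using s1 s2 s3 by simp
  have "2 * T - (2 * x 1 + 2 * of_nat (n-3) * T + 2 * x (n-1)) = 2 * (T - (x 1 + of_nat (n-3) * T + x (n-1)))"
    by (simp add: algebra_simps)
  also have "\<dots> = 0" using h by simp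
  finally have prev: "2 * T = 2 * x 1 + 2 * of_nat (n-3) * T + 2 * x (n-1)" by simp
  have a: "2 * x 1 = T" and b: "2 * x (n-1) = T" using x1 xn by simp_all
  have "2 * T = T + 2 * of_nat (n-3) * T + T" using prev unfolding a b .
  hence "(2 * of_nat (n-3)) * T = 0" by (simp add: algebra_simps)
  moreover have "(2 * of_nat (n-3) :: 'a) \<noteq> 0"
  proof -
    have "n - 3 \<noteq> 0" using n4 by arith
    hence "(of_nat (n-3)::'a) \<noteq> 0" by (simp only: of_nat_eq_0_iff) simp
    thus ?thesis by (simp del: of_nat_diff)
  qed
  ultimately have T0: "T = 0" by simp
  have xz: "x l = 0" if "1 \<le> l" "l < n" for l
  proof -
    have "l = 1 \<or> l = n - 1 \<or> (2 \<le> l \<and> l + 2 \<le> n)" using that by arith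
    thus ?thesis using x1 xn e3 T0 by auto
  qed
  obtain i k where sik: "s = (i,k)" by (cases s)
  have "B s s = (\<Sum>l\<in>{i..<k}. x l)" using ds s sik by auto
  also have "\<dots> = 0" using xz s sik by (intro sum.neutral) auto
  finally show ?thesis .
qed

lemma nilp_isD:
  assumes n4: "4 \<le> n" and h: "\<forall>p\<in>Pn n. \<forall>q\<in>Pn n. B1 p q \<noteq> 0 \<longrightarrow> isD n p q"
  shows "nilp n B1"
proof -
  have z1: "linmap n B1 u (l,l+1) = 0" for u l
  proof (cases "(l,l+1) \<in> Pn n")
    case True
    have "u p * B1 p (l,l+1) = 0" if "p \<in> Pn n" for p
      using h[rule_format, OF that True] isD_gen_target[OF n4, of p l] by auto
    hence "(\<Sum>p\<in>Pn n. u p * B1 p (l,l+1)) = 0" by (intro sum.neutral) blast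
    thus ?thesis by (simp add: linmap_def)
  next
    case False thus ?thesis by (simp add: linmap_def del: Pn_iff)
  qed
  have z2: "linmap n B1 (linmap n B1 v) q = 0" for v q
  proof (cases "q \<in> Pn n")
    case qP: True
    have "linmap n B1 v p * B1 p q = 0" if "p \<in> Pn n" for p
    proof (cases "B1 p q = 0")
      case False
      hence "isD n p q" using h that qP by blast
      then obtain j where "p = (j,j+1)" using isD_tgt[OF n4] by blast
      thus ?thesis using z1 by simp
    qed simp
    hence "(\<Sum>p\<in>Pn n. linmap n B1 v p * B1 p q) = 0" by (intro sum.neutral) blast
    thus ?thesis by (simp add: linmap_def)
  next
    case False thus ?thesis by (simp add: linmap_def)
  qed
  have "\<forall>v\<in>Tn n. (linmap n B1 ^^ 2) v = (\<lambda>_. 0)"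
    using z2 by (simp add: numeral_2_eq_2 fun_eq_iff)
  thus ?thesis unfolding nilp_def by blast
qed



definition Sup :: "nat \<Rightarrow> (nat \<times> nat \<Rightarrow> nat \<times> nat \<Rightarrow> 'a::field) \<Rightarrow> ((nat \<times> nat) \<times> (nat \<times> nat)) set" where
  "Sup n B = {(s,t). isD n s t \<and> B s t \<noteq> 0}"

lemma finite_offdiag: "finite (offdiag_support n B)"
proof -
  have "offdiag_support n B \<subseteq> Pn n \<times> Pn n" by (auto simp: offdiag_support_def)
  thus ?thesis by (rule finite_subset) simp
qed

lemma Sup_sub: "4 \<le> n \<Longrightarrow> Sup n B \<subseteq> offdiag_support n B"
  using isD_Pn unfolding Sup_def offdiag_support_def by blast

lemma supp_B1:
  fixes B :: "nat \<times> nat \<Rightarrow> nat \<times> nat \<Rightarrow> 'a::field_char_0"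
  assumes n4: "4 \<le> n" and D: "is_derivation n B"
  shows "offdiag_support n (B1of n B) = Sup n B"
proof -
  have "(s,t) \<in> offdiag_support n (B1of n B) \<longleftrightarrow> (s,t) \<in> Sup n B" for s t
  proof
    assume "(s,t) \<in> offdiag_support n (B1of n B)"
    hence h: "s \<in> Pn n" "t \<in> Pn n" "s \<noteq> t" "B1of n B s t \<noteq> 0" by (auto simp: offdiag_support_def)
    thus "(s,t) \<in> Sup n B" using B1_structure[OF n4 D h(1,2)] by (auto simp: Sup_def split: if_splits)
  next
    assume "(s,t) \<in> Sup n B"
    hence h: "isD n s t" "B s t \<noteq> 0" by (auto simp: Sup_def)
    have "s \<in> Pn n" "t \<in> Pn n" "s \<noteq> t" using isD_Pn[OF n4 h(1)] by auto
    thus "(s,t) \<in> offdiag_support n (B1of n B)"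
      using B1_structure[OF n4 D, of s t] h by (auto simp: offdiag_support_def)
  qed
  thus ?thesis by auto
qed

lemma Sup_image: assumes n4: "4 \<le> n"
  shows "Sup n B = (\<lambda>j. ((j,j+1), tgt n j)) ` {j\<in>{1..<n}. B (j,j+1) (tgt n j) \<noteq> 0}"
  unfolding Sup_def using isD_tgt[OF n4] by auto

lemma Sup_card: assumes n4: "4 \<le> n"
  shows "card (Sup n B) = card {j\<in>{1..<n}. B (j,j+1) (tgt n j) \<noteq> 0}"
  unfolding Sup_image[OF n4] by (rule card_image) (auto simp: inj_on_def)

lemma main_struct:
  fixes A B :: "nat \<times> nat \<Rightarrow> nat \<times> nat \<Rightarrow> 'a::field_char_0"
  assumes n4: "4 \<le> n" and V: "valid_structure n A" and C: "canonical_form n A B"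
  shows "is_derivation n B \<and> offdiag_support n B = Sup n B \<and> card (Sup n B) \<le> n - 2"
proof -
  have DA: "is_derivation n A" and NA: "\<not> nilp n A" using V
    unfolding valid_structure_def nonnilpotent_def nilp_def by auto
  have admB: "admissible n A B" and minB: "\<And>A''. admissible n A A'' \<Longrightarrow> offdiag_count n B \<le> offdiag_count n A''"
    using C unfolding canonical_form_def by auto
  have DB: "is_derivation n B" using admissible_deriv[OF admB DA] .
  let ?B1 = "B1of n B"
  have adm1: "admissible n A ?B1" using admB B1_step[of n B] unfolding admissible_def
    by (blast intro: rtranclp.rtrancl_into_rtrancl)
  have s1: "offdiag_support n ?B1 = Sup n B" by (rule supp_B1[OF n4 DB])
  have le1: "offdiag_count n B \<le> card (Sup n B)" using minB[OF adm1] s1 by (simp add: offdiag_count_def)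
  have sub: "Sup n B \<subseteq> offdiag_support n B" by (rule Sup_sub[OF n4])
  have eqS: "offdiag_support n B = Sup n B"
    using card_subset_eq[OF finite_offdiag sub] le1 card_mono[OF finite_offdiag sub]
    by (simp add: offdiag_count_def)
  define J where "J = {j\<in>{1..<n}. B (j,j+1) (tgt n j) \<noteq> 0}"
  have cJ: "card (Sup n B) = card J" unfolding J_def by (rule Sup_card[OF n4])
  have shape: "\<forall>s\<in>Pn n. \<forall>t\<in>Pn n. ?B1 s t = (if s = t then B s s else if isD n s t then ?B1 s t else 0)"
    using B1_structure[OF n4 DB] by auto
  have bound: "card J \<le> n - 2"
  proof (rule ccontr)
    assume "\<not> card J \<le> n - 2"
    hence cJ1: "card J \<ge> n - 1" by arith
    have Jsub: "J \<subseteq> {1..<n}" unfolding J_def by auto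
    have Jall: "J = {1..<n}"
      using card_subset_eq[OF _ Jsub] cJ1 card_mono[OF _ Jsub] by simp
    show False
    proof (cases "\<exists>j. 1 \<le> j \<and> j < n \<and> B (tgt n j) (tgt n j) \<noteq> B (j,j+1) (j,j+1)")
      case True
      then obtain j where j: "1 \<le> j" "j < n" and dne: "B (tgt n j) (tgt n j) \<noteq> B (j,j+1) (j,j+1)" by blast
      obtain B2 where st: "adm_step n ?B1 B2"
        and B2: "\<forall>s\<in>Pn n. \<forall>t\<in>Pn n. B2 s t = (if s = (j,j+1) \<and> t = tgt n j then 0 else ?B1 s t)"
        using conj_remove[OF n4 j shape] dne by blast
      have adm2: "admissible n A B2" using adm1 st unfolding admissible_def
        by (blast intro: rtranclp.rtrancl_into_rtrancl)
      have s2: "offdiag_support n B2 = offdiag_support n ?B1 - {((j,j+1), tgt n j)}"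
      proof -
        have "(s,t) \<in> offdiag_support n B2 \<longleftrightarrow> (s,t) \<in> offdiag_support n ?B1 - {((j,j+1), tgt n j)}" for s t
        proof (cases "s \<in> Pn n \<and> t \<in> Pn n")
          case True thus ?thesis using B2[rule_format, of s t] unfolding offdiag_support_def by auto
        qed (auto simp: offdiag_support_def)
        thus ?thesis by auto
      qed
      have mem: "((j,j+1), tgt n j) \<in> Sup n B" using Jall j unfolding J_def Sup_image[OF n4] by auto
      have fin: "finite (Sup n B)" using finite_offdiag[of n ?B1] s1 by simp
      have "offdiag_count n B2 = card (Sup n B) - 1" unfolding offdiag_count_def s2 s1
        using mem fin by simp
      moreover have "card (Sup n B) > 0" using mem fin by (auto simp: card_gt_0_iff)
      moreover have "offdiag_count n B = card (Sup n B)" using eqS by (simp add: offdiag_count_def)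
      ultimately show False using minB[OF adm2] by simp
    next
      case False
      hence eq: "\<forall>j. 1 \<le> j \<and> j < n \<longrightarrow> B (tgt n j) (tgt n j) = B (j,j+1) (j,j+1)" by blast
      have z: "B s s = 0" if "s \<in> Pn n" for s using diag_zero[OF n4 DB eq that] .
      have "\<forall>p\<in>Pn n. \<forall>q\<in>Pn n. ?B1 p q \<noteq> 0 \<longrightarrow> isD n p q"
        using B1_structure[OF n4 DB] z by auto
      hence "nilp n ?B1" by (rule nilp_isD[OF n4])
      hence "nilp n A" using admissible_nilp[OF adm1 DA] by blast
      thus False using NA by blast
    qed
  qed
  show ?thesis using DB eqS bound cJ by simp
qed



definition tau :: "(nat \<Rightarrow> 'a::field) \<Rightarrow> nat \<times> nat \<Rightarrow> 'a" where
  "tau r p = (\<Prod>l\<in>{fst p..<snd p}. r l)"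

lemma tau_nz: "(\<forall>l. r l \<noteq> 0) \<Longrightarrow> tau r p \<noteq> 0"
  by (simp add: tau_def)

lemma tau_split: "i \<le> l \<Longrightarrow> l \<le> k \<Longrightarrow> tau r (i,k) = tau r (i,l) * tau r (l,k)"
  by (simp add: tau_def prod.atLeastLessThan_concat)

lemma linmap_diag: "linmap n (\<lambda>p q. if p = q then f p else 0) v = (\<lambda>q. if q \<in> Pn n then v q * f q else 0)"
proof
  fix q
  have "(\<Sum>p\<in>Pn n. v p * (if p = q then f p else 0)) = (\<Sum>p\<in>Pn n. if p = q then v p * f p else 0)"
    by (rule sum.cong) auto
  thus "linmap n (\<lambda>p q. if p = q then f p else 0) v q = (if q \<in> Pn n then v q * f q else 0)"
    by (simp add: linmap_def)
qed

lemma Tn_zero': "v \<in> Tn n \<Longrightarrow> p \<notin> Pn n \<Longrightarrow> v p = 0" by (metis Tn_iff)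

lemma torus_hom:
  assumes v: "v \<in> Tn n" and w: "w \<in> Tn n"
  shows "brk n (\<lambda>q. if q \<in> Pn n then v q * tau r q else 0) (\<lambda>q. if q \<in> Pn n then w q * tau r q else 0) (x,y)
        = tau r (x,y) * brk n v w (x,y)"
proof -
  let ?V = "\<lambda>q. if q \<in> Pn n then v q * tau r q else 0" and ?W = "\<lambda>q. if q \<in> Pn n then w q * tau r q else 0"
  have V: "?V q = v q * tau r q" for q using Tn_zero'[OF v, of q] by auto
  have W: "?W q = w q * tau r q" for q using Tn_zero'[OF w, of q] by auto
  have tm: "?V (x,l) * ?W (l,y) - ?W (x,l) * ?V (l,y) = tau r (x,y) * (v (x,l) * w (l,y) - w (x,l) * v (l,y))" for l
  proof (cases "(x,l) \<in> Pn n \<and> (l,y) \<in> Pn n")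
    case True
    hence "tau r (x,y) = tau r (x,l) * tau r (l,y)" by (intro tau_split) auto
    thus ?thesis unfolding V W by (simp add: algebra_simps)
  next
    case False
    hence "v (x,l) * w (l,y) = 0" "w (x,l) * v (l,y) = 0" using Tn_zero'[OF v] Tn_zero'[OF w] by auto
    thus ?thesis unfolding V W by (auto simp: algebra_simps)
  qed
  show ?thesis unfolding brk_def case_prod_conv tm by (simp add: sum_distrib_left)
qed

lemma torus_step:
  assumes r: "\<forall>l. r l \<noteq> 0"
  shows "adm_step n B (\<lambda>p q. tau r p * B p q / tau r q)"
proof -
  let ?G = "\<lambda>p q. if p = q then tau r p else 0"
  let ?Gi = "\<lambda>p q. if p = q then inverse (tau r p) else 0"
  have bij: "bij_betw (linmap n ?G) (Tn n) (Tn n)"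
  proof (rule bij_betw_byWitness[where f'="linmap n ?Gi"])
    show "\<forall>v\<in>Tn n. linmap n ?Gi (linmap n ?G v) = v"
    proof (intro ballI ext)
      fix v :: "nat \<times> nat \<Rightarrow> 'a" and q assume v: "v \<in> Tn n"
      show "linmap n ?Gi (linmap n ?G v) q = v q"
        using tau_nz[OF r, of q] Tn_zero'[OF v, of q] unfolding linmap_diag by auto
    qed
    show "\<forall>v\<in>Tn n. linmap n ?G (linmap n ?Gi v) = v"
    proof (intro ballI ext)
      fix v :: "nat \<times> nat \<Rightarrow> 'a" and q assume v: "v \<in> Tn n"
      show "linmap n ?G (linmap n ?Gi v) q = v q"
        using tau_nz[OF r, of q] Tn_zero'[OF v, of q] unfolding linmap_diag by auto
    qed
  qed (auto intro: linmap_Tn)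
  have hom: "\<forall>v\<in>Tn n. \<forall>w\<in>Tn n. linmap n ?G (brk n v w) = (\<lambda>q. if q \<in> Pn n then brk n (linmap n ?G v) (linmap n ?G w) q else 0)"
  proof (intro ballI ext)
    fix v w :: "nat \<times> nat \<Rightarrow> 'a" and q :: "nat \<times> nat" assume v: "v \<in> Tn n" and w: "w \<in> Tn n"
    obtain x y where q: "q = (x,y)" by (cases q)
    show "linmap n ?G (brk n v w) q = (if q \<in> Pn n then brk n (linmap n ?G v) (linmap n ?G w) q else 0)"
      unfolding linmap_diag q torus_hom[OF v w] by (simp add: mult.commute)
  qed
  have rel: "\<forall>p\<in>Pn n. \<forall>s\<in>Pn n. (\<Sum>q\<in>Pn n. ?G p q * B q s) = (\<Sum>q\<in>Pn n. tau r p * B p q / tau r q * ?G q s)"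
  proof (intro ballI)
    fix p s assume p: "p \<in> Pn n" and s: "s \<in> Pn n"
    have "(\<Sum>q\<in>Pn n. ?G p q * B q s) = (\<Sum>q\<in>Pn n. if q = p then tau r p * B p s else 0)"
      by (rule sum.cong) auto
    also have "\<dots> = tau r p * B p s" using p by simp
    also have "\<dots> = (\<Sum>q\<in>Pn n. if q = s then tau r p * B p s / tau r s * tau r s else 0)"
      using s tau_nz[OF r, of s] by simp
    also have "\<dots> = (\<Sum>q\<in>Pn n. tau r p * B p q / tau r q * ?G q s)"
      by (rule sum.cong) auto
    finally show "(\<Sum>q\<in>Pn n. ?G p q * B q s) = (\<Sum>q\<in>Pn n. tau r p * B p q / tau r q * ?G q s)" .
  qed
  show ?thesis unfolding adm_step_def using bij hom rel by blast
qed

lemma scale_step: "c \<noteq> 0 \<Longrightarrow> adm_step n B (\<lambda>p q. c * B p q)"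
  unfolding adm_step_def by blast



lemma tau_gen: "tau r (j, Suc j) = r j" by (simp add: tau_def)

lemma normal_gen:
  fixes A B :: "nat \<times> nat \<Rightarrow> nat \<times> nat \<Rightarrow> 'a::field_char_0"
  assumes n4: "4 \<le> n" and V: "valid_structure n A" and C: "canonical_form n A B" and r: "\<forall>l. r l \<noteq> 0"
  shows "\<exists>A''. admissible n B A'' \<and> offdiag_support n A'' = offdiag_support n B \<and>
     (\<forall>(s,t)\<in>offdiag_support n A''. \<exists>j. 1 \<le> j \<and> j < n \<and> s = (j,j+1) \<and> t = tgt n j \<and>
        A'' s t = (if j = 1 \<or> j = n - 1 then r j * r j * B s t else r j * B s t))"
proof -
  have M: "is_derivation n B" "offdiag_support n B = Sup n B" using main_struct[OF n4 V C] by auto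
  let ?B1 = "B1of n B"
  define c where "c = tau r (1,n)"
  have c0: "c \<noteq> 0" unfolding c_def by (rule tau_nz[OF r])
  define A'' where "A'' = (\<lambda>p q. c * (tau r p * ?B1 p q / tau r q))"
  have adm: "admissible n B A''"
  proof -
    have "adm_step n B ?B1" by (rule B1_step)
    moreover have "adm_step n ?B1 (\<lambda>p q. tau r p * ?B1 p q / tau r q)" by (rule torus_step[OF r])
    moreover have "adm_step n (\<lambda>p q. tau r p * ?B1 p q / tau r q) A''" unfolding A''_def by (rule scale_step[OF c0])
    ultimately show ?thesis unfolding admissible_def
      by (meson rtranclp.rtrancl_into_rtrancl rtranclp.rtrancl_refl)
  qed
  have sA: "offdiag_support n A'' = offdiag_support n ?B1"
    unfolding offdiag_support_def A''_def using c0 tau_nz[OF r] by auto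
  have sB1: "offdiag_support n ?B1 = Sup n B" by (rule supp_B1[OF n4 M(1)])
  have vals: "\<exists>j. 1 \<le> j \<and> j < n \<and> s = (j,j+1) \<and> t = tgt n j \<and>
        A'' s t = (if j = 1 \<or> j = n - 1 then r j * r j * B s t else r j * B s t)"
    if st: "(s,t) \<in> offdiag_support n A''" for s t
  proof -
    have "isD n s t" using st sA sB1 by (auto simp: Sup_def)
    then obtain j where j: "1 \<le> j" "j < n" "s = (j,j+1)" "t = tgt n j" using isD_tgt[OF n4] by blast
    have sP: "s \<in> Pn n" "t \<in> Pn n" "s \<noteq> t" using isD_Pn[OF n4 \<open>isD n s t\<close>] by auto
    have B1v: "?B1 s t = B s t" using B1_structure[OF n4 M(1) sP(1,2)] sP(3) \<open>isD n s t\<close> by simp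
    have ts: "tau r s = r j" using j by (simp add: tau_gen)
    have tt: "tau r t \<noteq> 0" by (rule tau_nz[OF r])
    have val: "A'' s t = c * (r j * B s t / tau r t)" unfolding A''_def B1v ts ..
    have "A'' s t = (if j = 1 \<or> j = n - 1 then r j * r j * B s t else r j * B s t)"
    proof (cases "j = 1")
      case True
      hence t: "t = (2,n)" using j by (simp add: tgt_def)
      have "c = tau r (1,2) * tau r (2,n)" unfolding c_def using n4 by (intro tau_split) auto
      moreover have "tau r (1,2) = r 1" using tau_gen[of r 1] by (simp add: numeral_2_eq_2)
      ultimately show ?thesis using val True t tt by (simp add: field_simps)
    next
      case F1: False
      show ?thesis
      proof (cases "j = n - 1")
        case True
        hence t: "t = (1,n-1)" using j F1 by (simp add: tgt_def)
        have "c = tau r (1,n-1) * tau r (n-1,n)" unfolding c_def using n4 by (intro tau_split) auto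
        moreover have "tau r (n-1,n) = r (n-1)" using tau_gen[of r "n-1"] n4 by simp
        ultimately show ?thesis using val True t tt by (simp add: field_simps)
      next
        case False
        hence t: "t = (1,n)" using j F1 by (simp add: tgt_def)
        show ?thesis using val False F1 t tt by (simp add: c_def field_simps)
      qed
    qed
    thus ?thesis using j by blast
  qed
  show ?thesis using adm sA sB1 M(2) vals by blast
qed



lemma count_bound:
  fixes A B :: "nat \<times> nat \<Rightarrow> nat \<times> nat \<Rightarrow> 'a::field_char_0"
  assumes n4: "4 \<le> n" and V: "valid_structure n A" and C: "canonical_form n A B"
  shows "offdiag_count n B \<le> n - 2"
  using main_struct[OF n4 V C] by (simp add: offdiag_count_def)

lemma complex_norm:
  fixes A B :: "nat \<times> nat \<Rightarrow> nat \<times> nat \<Rightarrow> complex"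
  assumes n4: "4 \<le> n" and V: "valid_structure n A" and C: "canonical_form n A B"
  shows "normalizable_to n {1} B"
proof -
  define b where "b l = (if B (l,l+1) (tgt n l) = 0 then 1 else B (l,l+1) (tgt n l))" for l
  define r where "r l = inverse (if l = 1 \<or> l = n - 1 then csqrt (b l) else b l)" for l
  have b0: "b l \<noteq> 0" for l by (simp add: b_def)
  have r0: "\<forall>l. r l \<noteq> 0" using b0 by (simp add: r_def)
  obtain A'' where adm: "admissible n B A''" and sA: "offdiag_support n A'' = offdiag_support n B"
    and vals: "\<forall>(s,t)\<in>offdiag_support n A''. \<exists>j. 1 \<le> j \<and> j < n \<and> s = (j,j+1) \<and> t = tgt n j \<and>
        A'' s t = (if j = 1 \<or> j = n - 1 then r j * r j * B s t else r j * B s t)"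
    using normal_gen[OF n4 V C r0] by blast
  have "A'' s t = 1" if st: "(s,t) \<in> offdiag_support n A''" for s t
  proof -
    obtain j where j: "1 \<le> j" "j < n" "s = (j,j+1)" "t = tgt n j"
      and v: "A'' s t = (if j = 1 \<or> j = n - 1 then r j * r j * B s t else r j * B s t)"
    proof -
      have "case (s,t) of (s,t) \<Rightarrow> \<exists>j. 1 \<le> j \<and> j < n \<and> s = (j,j+1) \<and> t = tgt n j \<and>
        A'' s t = (if j = 1 \<or> j = n - 1 then r j * r j * B s t else r j * B s t)" by (rule bspec[OF vals st])
      hence "\<exists>j. 1 \<le> j \<and> j < n \<and> s = (j,j+1) \<and> t = tgt n j \<and>
        A'' s t = (if j = 1 \<or> j = n - 1 then r j * r j * B s t else r j * B s t)" by (simp only: case_prod_conv)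
      thus ?thesis using that by blast
    qed
    have "B s t \<noteq> 0" using st sA by (auto simp: offdiag_support_def)
    hence bj: "b j = B s t" using j by (simp add: b_def)
    show ?thesis
    proof (cases "j = 1 \<or> j = n - 1")
      case True
      have "r j * r j * B s t = B s t / (csqrt (b j))\<^sup>2"
        using True by (simp add: r_def power2_eq_square field_simps)
      also have "\<dots> = 1" using bj b0[of j] by (simp add: power2_csqrt)
      finally show ?thesis using v True by simp
    next
      case False thus ?thesis using v bj b0[of j] by (simp add: r_def)
    qed
  qed
  thus ?thesis unfolding normalizable_to_def using adm sA by blast
qed

lemma real_norm:
  fixes A B :: "nat \<times> nat \<Rightarrow> nat \<times> nat \<Rightarrow> real"
  assumes n4: "4 \<le> n" and V: "valid_structure n A" and C: "canonical_form n A B"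
  shows "normalizable_to n {1, -1} B"
proof -
  define b where "b l = (if B (l,l+1) (tgt n l) = 0 then 1 else B (l,l+1) (tgt n l))" for l
  define r where "r l = inverse (if l = 1 \<or> l = n - 1 then sqrt \<bar>b l\<bar> else b l)" for l
  have b0: "b l \<noteq> 0" for l by (simp add: b_def)
  have r0: "\<forall>l. r l \<noteq> 0" using b0 by (simp add: r_def)
  obtain A'' where adm: "admissible n B A''" and sA: "offdiag_support n A'' = offdiag_support n B"
    and vals: "\<forall>(s,t)\<in>offdiag_support n A''. \<exists>j. 1 \<le> j \<and> j < n \<and> s = (j,j+1) \<and> t = tgt n j \<and>
        A'' s t = (if j = 1 \<or> j = n - 1 then r j * r j * B s t else r j * B s t)"
    using normal_gen[OF n4 V C r0] by blast
  have "A'' s t \<in> {1, -1}" if st: "(s,t) \<in> offdiag_support n A''" for s t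
  proof -
    obtain j where j: "1 \<le> j" "j < n" "s = (j,j+1)" "t = tgt n j"
      and v: "A'' s t = (if j = 1 \<or> j = n - 1 then r j * r j * B s t else r j * B s t)"
    proof -
      have "case (s,t) of (s,t) \<Rightarrow> \<exists>j. 1 \<le> j \<and> j < n \<and> s = (j,j+1) \<and> t = tgt n j \<and>
        A'' s t = (if j = 1 \<or> j = n - 1 then r j * r j * B s t else r j * B s t)" by (rule bspec[OF vals st])
      hence "\<exists>j. 1 \<le> j \<and> j < n \<and> s = (j,j+1) \<and> t = tgt n j \<and>
        A'' s t = (if j = 1 \<or> j = n - 1 then r j * r j * B s t else r j * B s t)" by (simp only: case_prod_conv)
      thus ?thesis using that by blast
    qed
    have "B s t \<noteq> 0" using st sA by (auto simp: offdiag_support_def)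
    hence bj: "b j = B s t" using j by (simp add: b_def)
    show ?thesis
    proof (cases "j = 1 \<or> j = n - 1")
      case True
      have sq: "sqrt \<bar>b j\<bar> * sqrt \<bar>b j\<bar> = \<bar>b j\<bar>" by simp
      have "r j * r j * B s t = B s t / \<bar>B s t\<bar>"
        using True bj b0[of j] sq by (simp add: r_def field_simps)
      also have "\<dots> \<in> {1, -1}" using \<open>B s t \<noteq> 0\<close> by (cases "B s t > 0") auto
      finally show ?thesis using v True by simp
    next
      case False thus ?thesis using v bj b0[of j] by (simp add: r_def)
    qed
  qed
  thus ?thesis unfolding normalizable_to_def using adm sA by blast
qed

theorem lemma5:
  fixes n :: nat
  assumes "n \<ge> 4"
  shows "(\<forall>A :: nat \<times> nat \<Rightarrow> nat \<times> nat \<Rightarrow> complex. valid_structure n A \<longrightarrow>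
            (\<forall>A'. canonical_form n A A' \<longrightarrow>
               offdiag_count n A' \<le> n - 2 \<and> normalizable_to n {1} A'))
       \<and> (\<forall>A :: nat \<times> nat \<Rightarrow> nat \<times> nat \<Rightarrow> real. valid_structure n A \<longrightarrow>
            (\<forall>A'. canonical_form n A A' \<longrightarrow>
               offdiag_count n A' \<le> n - 2 \<and> normalizable_to n {1, -1} A'))"
proof (intro conjI allI impI)
  fix A A' :: "nat \<times> nat \<Rightarrow> nat \<times> nat \<Rightarrow> complex" assume "valid_structure n A" "canonical_form n A A'"
  thus "offdiag_count n A' \<le> n - 2" "normalizable_to n {1} A'"
    using count_bound[OF assms] complex_norm[OF assms] by auto
next
  fix A A' :: "nat \<times> nat \<Rightarrow> nat \<times> nat \<Rightarrow> real" assume "valid_structure n A" "canonical_form n A A'"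
  thus "offdiag_count n A' \<le> n - 2" "normalizable_to n {1, -1} A'"
    using count_bound[OF assms] real_norm[OF assms] by auto
qed


end
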